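(* In the setting described in the context, assume the face quadrature is exact for $Q^{N+N_f}$ on each face and the mortar quadrature on each face is exact for $Q^{N+N_m}$, with $N_f,N_m\ge 0$, and let $K=\min(N,N_f,N_m)$. Let $g\in Q^K(\hat D)$ and let $\mathbf{g}=\big[g(\hat{\mathbf{x}});\,g(\hat{\mathbf{x}}_f);\,g(\hat{\mathbf{x}}_m)\big]$ be the concatenated vector of values of $g$ at the volume nodes, face nodes and mortar nodes. Then for each $i=1,\dots,d$, $$\hat{M}^{-1}\begin{bmatrix} I & E^T & E^TE_{mf}^T\end{bmatrix}\hat{Q}_{i,m}\,\mathbf{g}$$ equals the vector of values of $\partial g/\partial \hat x_i$ at the volume nodes.
   Context: Fix $d\in\{2,3\}$, $N\ge 1$, and a 1D quadrature rule on $[-1,1]$ with $N+1$ distinct nodes $x_1,\dots,x_{N+1}$ (either Gauss–Legendre or Gauss–Lobatto nodes) and positive weights $w_1,\dots,w_{N+1}$; let $\ell_1,\dots,\ell_{N+1}$ be the degree-$N$ Lagrange basis at these nodes. Set $\hat M_{1D}=\mathrm{diag}(w_1,\dots,w_{N+1})$ and $(\hat Q_{1D})_{jk}=w_j\ell_k'(x_j)$. On the reference element $\hat D=[-1,1]^d$ the volume nodes $\hat{\mathbf x}$ are the tensor grid of the 1D nodes, $\hat M=\hat M_{1D}\otimes\cdots\otimes\hat M_{1D}$ ($d$ factors, diagonal matrix of tensor weights), and $\hat Q_i=A_1\otimes\cdots\otimes A_d$ with $A_i=\hat Q_{1D}$ and $A_k=\hat M_{1D}$ for $k\ne i$. The face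 nodes $\hat{\mathbf x}_f$ are, for each of the $2d$ faces $\{\hat x_k=\pm1\}$, the points with $\hat x_k=\pm1$ and the other coordinates ranging over the 1D nodes; each face node carries the weight equal to the product of the 1D weights of its other coordinates, and $\hat M_f$ is the diagonal matrix of these face weights. $E$ maps the values at volume nodes of a polynomial in $Q^N(\hat D)$ to its values at the face nodes. The reference normal component $\hat n_i$ at any point of the face $\{\hat x_k=\pm1\}$ equals $\pm\delta_{ik}$; $\hat B_{i,f}=\mathrm{diag}(\hat{\mathbf n}_{i,f})\hat M_f$ where $\hat{\mathbf n}_{i,f}$ holds $\hat n_i$ at the face nodes. On each face choose mortar nodes $\hat{\mathbf x}_m$ (lying on that face) with real weights; $\hat M_m$ is the diagonal matrix of all mortar weights; $E_{mf}$ is block diagonal over faces, its block for a face mapping values at the face nodes of a polynomial in $Q^N$ of the $d-1$ face coordinates to its values at that face's mortar nodes; $E_{fm}=\hat M_f^{-1}E_{mf}^T\hat M_m$; $\hat B_{i,m}=\mathrm{diag}(\hat{\mathbf n}_{i,m})\hat M_m$ with $\hat{\mathbf n}_{i,m}$ the values of $\hat n_i$ at the mortar nodes. The mortar-based hybridized SBP operator is the $3\times 3$ block matrix (blocks indexed by volume, face, mortar nodes) $$\hat Q_{i,m}=\frac12\begin{bmatrix}\hat Q_i-\hat Q_i^T & E^T\hat B_{i,f} & 0\\ -\hat B_{i,f}E & 0 & \hat B_{i,f}E_{fm}\\ 0 & -\hat B_{i,m}E_{mf} & \hat B_{i,m}\end{bmatrix}.$$ $Q^{N_1,\dots,N_k}$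 denotes tensor-product polynomials in $k$ variables of degree at most $N_j$ in the $j$-th variable, $Q^M=Q^{M,\dots,M}$. "Face quadrature exact for $Q^{N+N_f}$" means that on each face the face-node quadrature integrates every polynomial in $Q^{N+N_f}$ of the face coordinates exactly; similarly for the mortar quadrature. *)

theory Defs
  imports "HOL-Analysis.Analysis" "HOL-Computational_Algebra.Polynomial"
begin

definition legendre :: "nat \<Rightarrow> real poly" where
  "legendre n = smult (1 / (2 ^ n * fact n)) ((pderiv ^^ n) ([:-1, 0, 1:] ^ n))"

definition lagrange :: "nat \<Rightarrow> (nat \<Rightarrow> real) \<Rightarrow> nat \<Rightarrow> real \<Rightarrow> real" where
  "lagrange N x k t = (\<Prod>m\<in>{0..N} - {k}. (t - x m) / (x k - x m))"

definition interp_rule :: "nat \<Rightarrow> (nat \<Rightarrow> real) \<Rightarrow> (nat \<Rightarrow> real) \<Rightarrow> bool" where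
  "interp_rule N x w \<longleftrightarrow> inj_on x {0..N} \<and>
     (\<forall>j\<le>N. w j = integral {-1..1} (lagrange N x j))"

definition gauss_legendre :: "nat \<Rightarrow> (nat \<Rightarrow> real) \<Rightarrow> (nat \<Rightarrow> real) \<Rightarrow> bool" where
  "gauss_legendre N x w \<longleftrightarrow> interp_rule N x w \<and>
     x ` {0..N} = {t. poly (legendre (Suc N)) t = 0}"

definition gauss_lobatto :: "nat \<Rightarrow> (nat \<Rightarrow> real) \<Rightarrow> (nat \<Rightarrow> real) \<Rightarrow> bool" where
  "gauss_lobatto N x w \<longleftrightarrow> interp_rule N x w \<and>
     x ` {0..N} = {-1, 1} \<union> {t. poly (pderiv (legendre N)) t = 0}"

definition M1D :: "(nat \<Rightarrow> real) \<Rightarrow> nat \<Rightarrow> nat \<Rightarrow> real" where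
  "M1D w j k = (if j = k then w j else 0)"

definition Q1D :: "nat \<Rightarrow> (nat \<Rightarrow> real) \<Rightarrow> (nat \<Rightarrow> real) \<Rightarrow> nat \<Rightarrow> nat \<Rightarrow> real" where
  "Q1D N x w j k = w j * deriv (lagrange N x k) (x j)"

text \<open>Points of R^d are functions nat => real; only coordinates 0..d-1 matter.
  Coordinate directions are 0-based: i < d.\<close>

definition vidx :: "nat \<Rightarrow> nat \<Rightarrow> nat list set" where
  "vidx d N = {\<alpha>. length \<alpha> = d \<and> set \<alpha> \<subseteq> {0..N}}"

definition tensor_poly :: "nat \<Rightarrow> nat \<Rightarrow> ((nat \<Rightarrow> real) \<Rightarrow> real) \<Rightarrow> bool" where
  "tensor_poly d K g \<longleftrightarrow> (\<exists>c :: nat list \<Rightarrow> real. \<forall>p.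
      g p = (\<Sum>\<alpha>\<in>vidx d K. c \<alpha> * (\<Prod>j<d. p j ^ (\<alpha> ! j))))"

definition partial_deriv :: "((nat \<Rightarrow> real) \<Rightarrow> real) \<Rightarrow> nat \<Rightarrow> (nat \<Rightarrow> real) \<Rightarrow> real" where
  "partial_deriv g i p = deriv (\<lambda>t. g (p(i := t))) (p i)"

definition lag_tensor :: "nat \<Rightarrow> (nat \<Rightarrow> real) \<Rightarrow> nat set \<Rightarrow> nat list \<Rightarrow> (nat \<Rightarrow> real) \<Rightarrow> real" where
  "lag_tensor N x L \<beta> p = (\<Prod>l\<in>L. lagrange N x (\<beta> ! l) (p l))"

definition vnode :: "nat \<Rightarrow> (nat \<Rightarrow> real) \<Rightarrow> nat list \<Rightarrow> nat \<Rightarrow> real" where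
  "vnode d x \<alpha> = (\<lambda>j. if j < d then x (\<alpha> ! j) else 0)"

definition Mvol :: "nat \<Rightarrow> (nat \<Rightarrow> real) \<Rightarrow> nat list \<Rightarrow> real" where
  "Mvol d w \<alpha> = (\<Prod>l<d. w (\<alpha> ! l))"

definition Qvol :: "nat \<Rightarrow> nat \<Rightarrow> (nat \<Rightarrow> real) \<Rightarrow> (nat \<Rightarrow> real) \<Rightarrow> nat \<Rightarrow> nat list \<Rightarrow> nat list \<Rightarrow> real" where
  "Qvol d N x w i \<alpha> \<beta> =
     (\<Prod>l<d. if l = i then Q1D N x w (\<alpha> ! l) (\<beta> ! l) else M1D w (\<alpha> ! l) (\<beta> ! l))"

text \<open>Face node (k, s, alpha): face x_k = +1 if s, -1 otherwise; the other
  coordinates are x (alpha ! l); the entry alpha ! k is fixed to 0.\<close>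

type_synonym fidx = "nat \<times> bool \<times> nat list"
type_synonym midx = "nat \<times> bool \<times> nat"

definition sgn_face :: "bool \<Rightarrow> real" where
  "sgn_face s = (if s then 1 else -1)"

definition face_set :: "nat \<Rightarrow> nat \<Rightarrow> nat \<Rightarrow> bool \<Rightarrow> nat list set" where
  "face_set d N k s = {\<alpha> \<in> vidx d N. \<alpha> ! k = 0}"

definition fidx_set :: "nat \<Rightarrow> nat \<Rightarrow> fidx set" where
  "fidx_set d N = {(k, s, \<alpha>). k < d \<and> \<alpha> \<in> face_set d N k s}"

definition fnode :: "nat \<Rightarrow> (nat \<Rightarrow> real) \<Rightarrow> fidx \<Rightarrow> nat \<Rightarrow> real" where
  "fnode d x f = (case f of (k, s, \<alpha>) \<Rightarrow>
      (\<lambda>j. if j = k then sgn_face s else if j < d then x (\<alpha> ! j) else 0))"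

definition fweight :: "nat \<Rightarrow> (nat \<Rightarrow> real) \<Rightarrow> fidx \<Rightarrow> real" where
  "fweight d w f = (case f of (k, s, \<alpha>) \<Rightarrow> (\<Prod>l\<in>{..<d} - {k}. w (\<alpha> ! l)))"

definition nrm :: "nat \<Rightarrow> nat \<Rightarrow> bool \<Rightarrow> real" where
  "nrm i k s = (if i = k then sgn_face s else 0)"

definition Emat :: "nat \<Rightarrow> nat \<Rightarrow> (nat \<Rightarrow> real) \<Rightarrow> fidx \<Rightarrow> nat list \<Rightarrow> real" where
  "Emat d N x f \<beta> = lag_tensor N x {..<d} \<beta> (fnode d x f)"

text \<open>On face (k, s) there are m k s mortar nodes y k s j (j < m k s)
  with real weights om k s j.\<close>

definition midx_set :: "nat \<Rightarrow> (nat \<Rightarrow> bool \<Rightarrow> nat) \<Rightarrow> midx set" where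
  "midx_set d m = {(k, s, j). k < d \<and> j < m k s}"

definition mortar_on_faces ::
  "nat \<Rightarrow> (nat \<Rightarrow> bool \<Rightarrow> nat) \<Rightarrow> (nat \<Rightarrow> bool \<Rightarrow> nat \<Rightarrow> nat \<Rightarrow> real) \<Rightarrow> bool" where
  "mortar_on_faces d m y \<longleftrightarrow> (\<forall>k<d. \<forall>s. \<forall>j<m k s.
      y k s j k = sgn_face s \<and> (\<forall>l<d. l \<noteq> k \<longrightarrow> -1 \<le> y k s j l \<and> y k s j l \<le> 1))"

definition mpoint :: "(nat \<Rightarrow> bool \<Rightarrow> nat \<Rightarrow> nat \<Rightarrow> real) \<Rightarrow> midx \<Rightarrow> nat \<Rightarrow> real" where
  "mpoint y \<mu> = (case \<mu> of (k, s, j) \<Rightarrow> y k s j)"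

definition mweight :: "(nat \<Rightarrow> bool \<Rightarrow> nat \<Rightarrow> real) \<Rightarrow> midx \<Rightarrow> real" where
  "mweight om \<mu> = (case \<mu> of (k, s, j) \<Rightarrow> om k s j)"

definition mface :: "midx \<Rightarrow> nat \<times> bool" where
  "mface \<mu> = (case \<mu> of (k, s, j) \<Rightarrow> (k, s))"

definition fface :: "fidx \<Rightarrow> nat \<times> bool" where
  "fface f = (case f of (k, s, \<alpha>) \<Rightarrow> (k, s))"

definition Emf :: "nat \<Rightarrow> nat \<Rightarrow> (nat \<Rightarrow> real) \<Rightarrow> (nat \<Rightarrow> bool \<Rightarrow> nat \<Rightarrow> nat \<Rightarrow> real)
     \<Rightarrow> midx \<Rightarrow> fidx \<Rightarrow> real" where
  "Emf d N x y \<mu> f = (case f of (k, s, \<alpha>) \<Rightarrow>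
      if mface \<mu> = (k, s) then lag_tensor N x ({..<d} - {k}) \<alpha> (mpoint y \<mu>) else 0)"

text \<open>E_fm = M_f^{-1} E_mf^T M_m.\<close>
definition Efm :: "nat \<Rightarrow> nat \<Rightarrow> (nat \<Rightarrow> real) \<Rightarrow> (nat \<Rightarrow> real)
     \<Rightarrow> (nat \<Rightarrow> bool \<Rightarrow> nat \<Rightarrow> nat \<Rightarrow> real) \<Rightarrow> (nat \<Rightarrow> bool \<Rightarrow> nat \<Rightarrow> real)
     \<Rightarrow> fidx \<Rightarrow> midx \<Rightarrow> real" where
  "Efm d N x w y om f \<mu> = (1 / fweight d w f) * Emf d N x y \<mu> f * mweight om \<mu>"

text \<open>A rule with nodes pt s and weights wt s (s in S) on the face normal to
  direction k is exact for Q^M of the face coordinates: exact on every tensor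
  monomial (hence, by linearity, on all of Q^M).\<close>
definition face_quad_exact :: "nat \<Rightarrow> nat \<Rightarrow> nat \<Rightarrow> 'a set \<Rightarrow> ('a \<Rightarrow> real)
     \<Rightarrow> ('a \<Rightarrow> nat \<Rightarrow> real) \<Rightarrow> bool" where
  "face_quad_exact d k M S wt pt \<longleftrightarrow> (\<forall>\<gamma>\<in>vidx d M.
     (\<Sum>s\<in>S. wt s * (\<Prod>l\<in>{..<d} - {k}. pt s l ^ (\<gamma> ! l)))
       = (\<Prod>l\<in>{..<d} - {k}. integral {-1..1} (\<lambda>t::real. t ^ (\<gamma> ! l))))"

datatype hidx = HV "nat list" | HF fidx | HM midx

definition hidx_set :: "nat \<Rightarrow> nat \<Rightarrow> (nat \<Rightarrow> bool \<Rightarrow> nat) \<Rightarrow> hidx set" where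
  "hidx_set d N m = HV ` vidx d N \<union> HF ` fidx_set d N \<union> HM ` midx_set d m"

definition Qim :: "nat \<Rightarrow> nat \<Rightarrow> (nat \<Rightarrow> real) \<Rightarrow> (nat \<Rightarrow> real)
     \<Rightarrow> (nat \<Rightarrow> bool \<Rightarrow> nat \<Rightarrow> nat \<Rightarrow> real) \<Rightarrow> (nat \<Rightarrow> bool \<Rightarrow> nat \<Rightarrow> real)
     \<Rightarrow> nat \<Rightarrow> hidx \<Rightarrow> hidx \<Rightarrow> real" where
  "Qim d N x w y om i a b = (1/2) * (case (a, b) of
      (HV \<alpha>, HV \<beta>) \<Rightarrow> Qvol d N x w i \<alpha> \<beta> - Qvol d N x w i \<beta> \<alpha>
    | (HV \<alpha>, HF f) \<Rightarrow> Emat d N x f \<alpha> * (nrm i (fst f) (fst (snd f)) * fweight d w f)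
    | (HV \<alpha>, HM \<mu>) \<Rightarrow> 0
    | (HF f, HV \<beta>) \<Rightarrow> - (nrm i (fst f) (fst (snd f)) * fweight d w f) * Emat d N x f \<beta>
    | (HF f, HF f') \<Rightarrow> 0
    | (HF f, HM \<mu>) \<Rightarrow> (nrm i (fst f) (fst (snd f)) * fweight d w f) * Efm d N x w y om f \<mu>
    | (HM \<mu>, HV \<beta>) \<Rightarrow> 0
    | (HM \<mu>, HF f) \<Rightarrow> - (nrm i (fst \<mu>) (fst (snd \<mu>)) * mweight om \<mu>) * Emf d N x y \<mu> f
    | (HM \<mu>, HM \<mu>') \<Rightarrow> (if \<mu> = \<mu>' then nrm i (fst \<mu>) (fst (snd \<mu>)) * mweight om \<mu> else 0))"

definition Prow :: "nat \<Rightarrow> nat \<Rightarrow> (nat \<Rightarrow> real) \<Rightarrow> (nat \<Rightarrow> bool \<Rightarrow> nat)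
     \<Rightarrow> (nat \<Rightarrow> bool \<Rightarrow> nat \<Rightarrow> nat \<Rightarrow> real) \<Rightarrow> nat list \<Rightarrow> hidx \<Rightarrow> real" where
  "Prow d N x m y \<alpha> h = (case h of
      HV \<beta> \<Rightarrow> (if \<alpha> = \<beta> then 1 else 0)
    | HF f \<Rightarrow> Emat d N x f \<alpha>
    | HM \<mu> \<Rightarrow> (\<Sum>f\<in>fidx_set d N. Emat d N x f \<alpha> * Emf d N x y \<mu> f))"

definition gvec :: "nat \<Rightarrow> (nat \<Rightarrow> real) \<Rightarrow> (nat \<Rightarrow> bool \<Rightarrow> nat \<Rightarrow> nat \<Rightarrow> real)
     \<Rightarrow> ((nat \<Rightarrow> real) \<Rightarrow> real) \<Rightarrow> hidx \<Rightarrow> real" where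
  "gvec d x y g h = (case h of
      HV \<alpha> \<Rightarrow> g (vnode d x \<alpha>)
    | HF f \<Rightarrow> g (fnode d x f)
    | HM \<mu> \<Rightarrow> g (mpoint y \<mu>))"

end

theory Submission
  imports Defs
begin
definition lagp :: "nat \<Rightarrow> (nat \<Rightarrow> real) \<Rightarrow> nat \<Rightarrow> real poly" where
  "lagp N x k = (\<Prod>m\<in>{0..N} - {k}. [: - x m / (x k - x m), 1 / (x k - x m) :])"

lemma poly_lagp: "poly (lagp N x k) t = lagrange N x k t"
  unfolding lagp_def lagrange_def poly_prod
  by (intro prod.cong) (auto simp: diff_divide_distrib)

lemma lagrange_fun: "lagrange N x k = poly (lagp N x k)"
  by (rule ext) (simp add: poly_lagp)

lemma deg_lin: "degree [:a,b:] \<le> 1"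
  by (cases "b = 0") auto

lemma degree_lagp: assumes "k \<le> N" shows "degree (lagp N x k) \<le> N"
proof -
  have "degree (lagp N x k) \<le> (\<Sum>m\<in>{0..N} - {k}. (degree \<circ> (\<lambda>m. [: - x m / (x k - x m), 1 / (x k - x m) :])) m)"
    unfolding lagp_def by (rule degree_prod_sum_le) simp
  also have "\<dots> \<le> (\<Sum>m\<in>{0..N} - {k}. 1)" by (intro sum_mono) (simp add: deg_lin)
  also have "\<dots> = N" using assms by simp
  finally show ?thesis .
qed

lemma lagrange_node:
  assumes "inj_on x {0..N}" "j \<le> N" "k \<le> N"
  shows "lagrange N x k (x j) = (if j = k then 1 else 0)"
proof (cases "j = k")
  case True
  have "\<And>m. m \<in> {0..N} - {k} \<Longrightarrow> x k \<noteq> x m" using assms inj_on_eq_iff[OF assms(1)] by auto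
  then have "lagrange N x k (x k) = 1" unfolding lagrange_def by (intro prod.neutral) auto
  then show ?thesis using True by simp
next
  case False
  have "lagrange N x k (x j) = 0" unfolding lagrange_def
    by (rule prod_zero) (use False assms in auto)
  then show ?thesis using False by simp
qed

lemma interp:
  assumes inj: "inj_on x {0..N}" and deg: "degree p \<le> N"
  shows "p = (\<Sum>b\<le>N. smult (poly p (x b)) (lagp N x b))"
proof (rule poly_eqI_degree[of "x ` {0..N}"])
  fix t assume "t \<in> x ` {0..N}"
  then obtain j where j: "j \<le> N" "t = x j" by auto
  have "poly (\<Sum>b\<le>N. smult (poly p (x b)) (lagp N x b)) t = (\<Sum>b\<le>N. poly p (x b) * (if j = b then 1 else 0))"
    using j inj by (simp add: poly_sum poly_lagp lagrange_node)
  also have "\<dots> = poly p t" using j by (simp add: if_distrib cong: if_cong)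
  finally show "poly p t = poly (\<Sum>b\<le>N. smult (poly p (x b)) (lagp N x b)) t" by simp
next
  have "card (x ` {0..N}) = Suc N" using card_image[OF inj] by simp
  moreover have "degree (\<Sum>b\<le>N. smult (poly p (x b)) (lagp N x b)) \<le> N"
    by (rule degree_sum_le) (auto intro: order_trans[OF degree_smult_le] degree_lagp)
  ultimately show "degree p < card (x ` {0..N})" "degree (\<Sum>b\<le>N. smult (poly p (x b)) (lagp N x b)) < card (x ` {0..N})"
    using deg by linarith+
qed

definition Ip :: "real poly \<Rightarrow> real" where "Ip p = integral {-1..1} (poly p)"

lemma poly_integrable: "poly p integrable_on {a..b::real}"
proof -
  have "continuous_on {a..b} (\<lambda>t. poly p t)" using continuous_on_poly[OF continuous_on_id, of "{a..b}" p] by simp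
  then show ?thesis by (simp add: integrable_continuous_interval)
qed

lemma Ip_add: "Ip (p + q) = Ip p + Ip q"
proof -
  have "poly (p + q) = (\<lambda>t. poly p t + poly q t)" by auto
  then show ?thesis unfolding Ip_def by (simp add: integral_add poly_integrable)
qed
lemma Ip_diff: "Ip (p - q) = Ip p - Ip q"
proof -
  have "poly (p - q) = (\<lambda>t. poly p t - poly q t)" by auto
  then show ?thesis unfolding Ip_def by (simp add: integral_diff poly_integrable)
qed
lemma Ip_smult: "Ip (smult c p) = c * Ip p"
proof -
  have "poly (smult c p) = (\<lambda>t. c * poly p t)" by auto
  then show ?thesis unfolding Ip_def by simp
qed
lemma Ip_0[simp]: "Ip 0 = 0"
proof -
  have "poly 0 = (\<lambda>t::real. 0)" by auto
  then show ?thesis unfolding Ip_def by simp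
qed
lemma Ip_sum: "finite A \<Longrightarrow> Ip (\<Sum>a\<in>A. f a) = (\<Sum>a\<in>A. Ip (f a))"
  by (induction A rule: finite_induct) (auto simp: Ip_add)

lemma Ip_pderiv: "Ip (pderiv p) = poly p 1 - poly p (-1)"
proof -
  have "(poly (pderiv p) has_integral (poly p 1 - poly p (-1))) {-1..1}"
  proof (rule fundamental_theorem_of_calculus)
    fix t :: real assume "t \<in> {-1..1}"
    have "(poly p has_real_derivative poly (pderiv p) t) (at t within {-1..1})"
      by (rule has_field_derivative_at_within) (rule poly_DERIV)
    then show "(poly p has_vector_derivative poly (pderiv p) t) (at t within {-1..1})"
      by (simp add: has_real_derivative_iff_has_vector_derivative)
  qed simp
  then show ?thesis unfolding Ip_def by (rule integral_unique)
qed
lemma aux_eq: "(X::real) = Y + Z \<Longrightarrow> X = C \<Longrightarrow> Z = C - Y" by simp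
lemma Ip_parts: "Ip (pderiv a * b) = poly (a * b) 1 - poly (a * b) (-1) - Ip (a * pderiv b)"
proof -
  have 1: "pderiv (a * b) = a * pderiv b + pderiv a * b"
    by (simp add: pderiv_mult)
  have "Ip (pderiv (a * b)) = Ip (a * pderiv b) + Ip (pderiv a * b)"
    unfolding 1 by (rule Ip_add)
  moreover have "Ip (pderiv (a * b)) = poly (a * b) 1 - poly (a * b) (-1)" by (rule Ip_pderiv)
  ultimately show ?thesis by (rule aux_eq)
qed

abbreviation "uu \<equiv> [:-1, 0, 1::real:]"

lemma poly_uu_1: "poly uu 1 = 0" and poly_uu_m1: "poly uu (-1) = 0" by simp_all

lemma higher_pderiv_factor:
  "j \<le> n \<Longrightarrow> \<exists>r. (pderiv ^^ j) (uu ^ n) = uu ^ (n - j) * r"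
proof (induction j)
  case 0 then show ?case by (intro exI[of _ 1]) simp
next
  case (Suc j)
  then obtain r where r: "(pderiv ^^ j) (uu ^ n) = uu ^ (n - j) * r" by auto
  define m where "m = n - Suc j"
  have nj: "n - j = Suc m" using Suc.prems unfolding m_def by simp
  have "(pderiv ^^ Suc j) (uu ^ n) = pderiv (uu ^ Suc m * r)" using r nj by simp
  also have "\<dots> = uu ^ Suc m * pderiv r + r * (smult (of_nat (Suc m)) (uu ^ m) * pderiv uu)"
    by (simp only: pderiv_mult pderiv_power_Suc)
  also have "\<dots> = uu ^ m * (uu * pderiv r + r * smult (of_nat (Suc m)) (pderiv uu))"
    by (simp add: algebra_simps)
  finally show ?case unfolding m_def by blast
qed

lemma higher_pderiv_vanish:
  assumes "j < n"
  shows "poly ((pderiv ^^ j) (uu ^ n)) 1 = 0 \<and> poly ((pderiv ^^ j) (uu ^ n)) (-1) = 0"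
proof -
  obtain r where r: "(pderiv ^^ j) (uu ^ n) = uu ^ (n - j) * r"
    using higher_pderiv_factor[of j n] assms by auto
  have "n - j \<noteq> 0" using assms by simp
  then show ?thesis unfolding r by (simp add: poly_mult poly_power zero_power)
qed

lemma parts_iter:
  "(\<forall>j<k. poly ((pderiv ^^ j) v) 1 = 0 \<and> poly ((pderiv ^^ j) v) (-1) = 0) \<Longrightarrow>
     Ip ((pderiv ^^ k) v * q) = (-1) ^ k * Ip (v * (pderiv ^^ k) q)"
proof (induction k arbitrary: v q)
  case 0 then show ?case by simp
next
  case (Suc k)
  have h: "\<forall>j<k. poly ((pderiv ^^ j) (pderiv v)) 1 = 0 \<and> poly ((pderiv ^^ j) (pderiv v)) (-1) = 0"
  proof (intro allI impI)
    fix j assume "j < k"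
    have "(pderiv ^^ j) (pderiv v) = (pderiv ^^ Suc j) v" by (simp only: funpow_Suc_right o_def)
    then show "poly ((pderiv ^^ j) (pderiv v)) 1 = 0 \<and> poly ((pderiv ^^ j) (pderiv v)) (-1) = 0"
      using Suc.prems \<open>j < k\<close> by auto
  qed
  have v1: "poly v 1 = 0" "poly v (-1) = 0" using Suc.prems[rule_format, of 0] by auto
  have "(pderiv ^^ Suc k) v = (pderiv ^^ k) (pderiv v)" by (simp add: funpow_Suc_right del: funpow.simps)
  then have "Ip ((pderiv ^^ Suc k) v * q) = (-1) ^ k * Ip (pderiv v * (pderiv ^^ k) q)"
    using Suc.IH[OF h] by simp
  also have "Ip (pderiv v * (pderiv ^^ k) q) = - Ip (v * (pderiv ^^ Suc k) q)"
    using Ip_parts[of v "(pderiv ^^ k) q"] v1 by (simp add: poly_mult)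
  finally show ?case by simp
qed

lemma degree_higher_pderiv: "degree ((pderiv ^^ j) (p::real poly)) = degree p - j"
  by (induction j) (auto simp: degree_pderiv)

lemma higher_pderiv_zero: "degree q < j \<Longrightarrow> (pderiv ^^ j) (q::real poly) = 0"
proof (induction j arbitrary: q)
  case 0 then show ?case by simp
next
  case (Suc j)
  show ?case
  proof (cases "j = 0")
    case True
    then have "degree q = 0" using Suc.prems by simp
    then show ?thesis using True by (simp add: pderiv_eq_0_iff)
  next
    case False
    have "degree (pderiv q) < j" using Suc.prems False by (simp add: degree_pderiv)
    then show ?thesis using Suc.IH by (simp add: funpow_Suc_right del: funpow.simps)
  qed
qed

lemma legendre_orth: "degree q < n \<Longrightarrow> Ip (legendre n * q) = 0"
proof -
  assume dq: "degree q < n"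
  have "Ip ((pderiv ^^ n) (uu ^ n) * q) = (-1) ^ n * Ip (uu ^ n * (pderiv ^^ n) q)"
    by (rule parts_iter) (auto dest: higher_pderiv_vanish)
  also have "\<dots> = 0" using higher_pderiv_zero[OF dq] by simp
  finally show ?thesis unfolding legendre_def by (simp add: Ip_smult)
qed

lemma degree_legendre: "degree (legendre n) \<le> n"
proof -
  have "degree (uu ^ n) \<le> 2 * n" using degree_power_le[of uu n] by simp
  then have "degree ((pderiv ^^ n) (uu ^ n)) \<le> n" by (simp add: degree_higher_pderiv)
  then show ?thesis unfolding legendre_def using degree_smult_le order_trans by blast
qed

definition Qd :: "nat \<Rightarrow> (nat \<Rightarrow> real) \<Rightarrow> (nat \<Rightarrow> real) \<Rightarrow> real poly \<Rightarrow> real" where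
  "Qd N x w p = (\<Sum>j\<le>N. w j * poly p (x j))"

lemma w_Ip: "interp_rule N x w \<Longrightarrow> j \<le> N \<Longrightarrow> w j = Ip (lagp N x j)"
  unfolding interp_rule_def Ip_def lagrange_fun by auto

lemma poly_interp_node:
  assumes inj: "inj_on x {0..N}" and j: "j \<le> N"
  shows "poly (\<Sum>b\<le>N. smult (poly p (x b)) (lagp N x b)) (x j) = poly p (x j)"
proof -
  have "poly (\<Sum>b\<le>N. smult (poly p (x b)) (lagp N x b)) (x j) = (\<Sum>b\<le>N. poly p (x b) * (if j = b then 1 else 0))"
    using j inj by (simp add: poly_sum poly_lagp lagrange_node)
  also have "\<dots> = poly p (x j)" using j by (simp add: if_distrib cong: if_cong)
  finally show ?thesis .
qed

lemma degree_interp: "degree (\<Sum>b\<le>N. smult (c b) (lagp N x b)) \<le> N"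
  by (rule degree_sum_le) (auto intro: order_trans[OF degree_smult_le] degree_lagp)

lemma interp_exact:
  assumes ir: "interp_rule N x w" and deg: "degree p \<le> N"
  shows "Ip p = Qd N x w p"
proof -
  have inj: "inj_on x {0..N}" using ir unfolding interp_rule_def by simp
  have e: "p = (\<Sum>b\<le>N. smult (poly p (x b)) (lagp N x b))" by (rule interp[OF inj deg])
  have "Ip p = Ip (\<Sum>b\<le>N. smult (poly p (x b)) (lagp N x b))" by (rule arg_cong[OF e])
  also have "\<dots> = (\<Sum>b\<le>N. poly p (x b) * Ip (lagp N x b))" by (simp add: Ip_sum Ip_smult)
  also have "\<dots> = Qd N x w p" unfolding Qd_def using w_Ip[OF ir] by (intro sum.cong) auto
  finally show ?thesis .
qed

definition omega :: "nat \<Rightarrow> (nat \<Rightarrow> real) \<Rightarrow> real poly" where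
  "omega N x = (\<Prod>k\<le>N. [:-x k, 1:])"

lemma degree_omega: "degree (omega N x) = Suc N"
  unfolding omega_def by (subst degree_prod_eq_sum_degree) auto

lemma omega_nz: "omega N x \<noteq> 0"
  using degree_omega[of N x] by auto

lemma dvd_vanish: "finite S \<Longrightarrow> (\<forall>s\<in>S. poly q s = 0) \<Longrightarrow> (\<Prod>s\<in>S. [:-s,1:]) dvd (q::real poly)"
proof (induction S arbitrary: q rule: finite_induct)
  case empty then show ?case by simp
next
  case (insert a S)
  have "[:-a,1:] dvd q" using insert.prems poly_eq_0_iff_dvd by auto
  then obtain q1 where q1: "q = [:-a,1:] * q1" by (auto elim: dvdE)
  have "\<forall>s\<in>S. poly q1 s = 0"
  proof
    fix s assume "s \<in> S"
    then have "s \<noteq> a" "poly q s = 0" using insert by auto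
    then show "poly q1 s = 0" using q1 by (simp add: poly_mult)
  qed
  then have "(\<Prod>s\<in>S. [:-s,1:]) dvd q1" using insert.IH by blast
  then show ?case unfolding prod.insert[OF insert.hyps] q1 by (rule mult_dvd_mono[OF dvd_refl])
qed

lemma omega_dvd:
  assumes inj: "inj_on x {0..N}" and van: "\<forall>j\<le>N. poly q (x j) = 0"
  shows "omega N x dvd q"
proof -
  have "omega N x = (\<Prod>s\<in>x ` {0..N}. [:-s,1:])"
    unfolding omega_def using prod.reindex[OF inj, of "\<lambda>s. [:-s,1:]"] by (simp add: atLeast0AtMost o_def)
  also have "\<dots> dvd q" using van by (intro dvd_vanish) auto
  finally show ?thesis .
qed

lemma exact_general:
  assumes ir: "interp_rule N x w"
    and orth: "\<And>q. degree q + Suc N < B \<Longrightarrow> Ip (omega N x * q) = 0"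
    and dp: "degree p < B"
  shows "Ip p = Qd N x w p"
proof -
  have inj: "inj_on x {0..N}" using ir unfolding interp_rule_def by simp
  define r where "r = (\<Sum>b\<le>N. smult (poly p (x b)) (lagp N x b))"
  have dr: "degree r \<le> N" unfolding r_def by (rule degree_interp)
  have pr: "poly r (x j) = poly p (x j)" if "j \<le> N" for j
    unfolding r_def using poly_interp_node[OF inj that] .
  have "omega N x dvd (p - r)" using pr by (intro omega_dvd inj) simp
  then obtain q where q: "p - r = omega N x * q" by (auto elim: dvdE)
  have oq: "Ip (omega N x * q) = 0"
  proof (cases "q = 0")
    case True then show ?thesis by simp
  next
    case False
    have "degree (p - r) = Suc N + degree q" using q degree_mult_eq[OF omega_nz False] degree_omega by simp
    moreover have "degree (p - r) \<le> max (degree p) (degree r)" by (rule degree_diff_le_max)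
    ultimately have "degree q + Suc N < B" using dp dr by auto
    then show ?thesis by (rule orth)
  qed
  have "p = r + omega N x * q" using q by (simp add: algebra_simps)
  then have "Ip p = Ip r + Ip (omega N x * q)" using Ip_add by metis
  also have "\<dots> = Qd N x w r" using oq interp_exact[OF ir dr] by simp
  also have "\<dots> = Qd N x w p" unfolding Qd_def using pr by (intro sum.cong) auto
  finally show ?thesis .
qed

lemma omega_multiple:
  assumes inj: "inj_on x {0..N}" and P0: "P \<noteq> 0" and dP: "degree P \<le> Suc N"
    and van: "\<forall>j\<le>N. poly P (x j) = 0"
  shows "\<exists>c. omega N x = smult c P"
proof -
  obtain r where r: "P = omega N x * r" using omega_dvd[OF inj van] by (auto elim: dvdE)
  have "r \<noteq> 0" using P0 r by auto
  then have "degree P = Suc N + degree r" using r degree_mult_eq[OF omega_nz] degree_omega by simp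
  then have "degree r = 0" using dP by simp
  then obtain a where a: "r = [:a:]" by (rule degree_eq_zeroE)
  have "a \<noteq> 0" using \<open>r \<noteq> 0\<close> a by simp
  then have "omega N x = smult (1/a) P" using r a by simp
  then show ?thesis by blast
qed

lemma finite_nodes_not_UNIV: "x ` {0..N::nat} \<noteq> (UNIV :: real set)"
proof
  assume h: "x ` {0..N::nat} = (UNIV :: real set)"
  have "finite (x ` {0..N})" by simp
  then have "finite (UNIV :: real set)" using h by simp
  with infinite_UNIV_char_0 show False by blast
qed

lemma GL_exact:
  assumes GL: "gauss_legendre N x w" and dp: "degree p < 2*N+2"
  shows "Ip p = Qd N x w p"
proof -
  have ir: "interp_rule N x w" and S: "x ` {0..N} = {t. poly (legendre (Suc N)) t = 0}"
    using GL unfolding gauss_legendre_def by auto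
  have inj: "inj_on x {0..N}" using ir unfolding interp_rule_def by simp
  have P0: "legendre (Suc N) \<noteq> 0"
  proof
    assume "legendre (Suc N) = 0"
    then have "x ` {0..N} = UNIV" using S by simp
    then show False using finite_nodes_not_UNIV by blast
  qed
  have van: "\<forall>j\<le>N. poly (legendre (Suc N)) (x j) = 0" using S by auto
  obtain c where c: "omega N x = smult c (legendre (Suc N))"
    using omega_multiple[OF inj P0 degree_legendre van] by blast
  show ?thesis
  proof (rule exact_general[OF ir _ dp])
    fix q :: "real poly" assume "degree q + Suc N < 2*N+2"
    then have "degree q < Suc N" by simp
    then show "Ip (omega N x * q) = 0" using legendre_orth c by (simp add: Ip_smult)
  qed
qed

lemma GLL_exact:
  assumes GLL: "gauss_lobatto N x w" and N1: "N \<ge> 1" and dp: "degree p < 2*N"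
  shows "Ip p = Qd N x w p"
proof -
  have ir: "interp_rule N x w" and S: "x ` {0..N} = {-1, 1} \<union> {t. poly (pderiv (legendre N)) t = 0}"
    using GLL unfolding gauss_lobatto_def by auto
  have inj: "inj_on x {0..N}" using ir unfolding interp_rule_def by simp
  define P where "P = legendre N"
  define Phi where "Phi = uu * pderiv P"
  have P0: "pderiv P \<noteq> 0"
  proof
    assume "pderiv P = 0"
    then have "x ` {0..N} = UNIV" using S unfolding P_def by simp
    then show False using finite_nodes_not_UNIV by blast
  qed
  have uu0: "uu \<noteq> 0" by simp
  have Phi0: "Phi \<noteq> 0" unfolding Phi_def using P0 uu0 mult_eq_0_iff by blast
  have "degree Phi \<le> degree uu + degree (pderiv P)" unfolding Phi_def by (rule degree_mult_le)
  also have "\<dots> \<le> 2 + (N - 1)" using degree_legendre[of N] unfolding P_def by (simp add: degree_pderiv)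
  finally have dPhi: "degree Phi \<le> Suc N" using N1 by simp
  have van: "\<forall>j\<le>N. poly Phi (x j) = 0"
  proof (intro allI impI)
    fix j assume "j \<le> N"
    then have "x j \<in> x ` {0..N}" by simp
    then have "x j = -1 \<or> x j = 1 \<or> poly (pderiv P) (x j) = 0" using S unfolding P_def by auto
    then show "poly Phi (x j) = 0" unfolding Phi_def by (auto simp: poly_mult)
  qed
  obtain c where c: "omega N x = smult c Phi"
    using omega_multiple[OF inj Phi0 dPhi van] by blast
  show ?thesis
  proof (rule exact_general[OF ir _ dp])
    fix q :: "real poly" assume "degree q + Suc N < 2*N"
    then have dq: "degree q + 1 < N" by simp
    have "degree (pderiv (uu * q)) \<le> degree (uu * q) - 1" by (simp add: degree_pderiv)
    also have "\<dots> \<le> degree q + 1" using degree_mult_le[of uu q] by simp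
    finally have d2: "degree (pderiv (uu * q)) < N" using dq by simp
    have "Ip (Phi * q) = Ip (pderiv P * (uu * q))" unfolding Phi_def by (simp add: algebra_simps)
    also have "\<dots> = 0" using Ip_parts[of P "uu * q"] legendre_orth[OF d2] unfolding P_def
      by (simp add: poly_mult)
    finally show "Ip (omega N x * q) = 0" using c by (simp add: Ip_smult)
  qed
qed

lemma weight_nonzero:
  assumes j: "j \<le> N"
    and ex: "Ip h = Qd N x w h"
    and nonneg: "\<And>t. t \<in> {-1..1} \<Longrightarrow> poly h t \<ge> 0"
    and vb: "\<And>b. b \<le> N \<Longrightarrow> b \<noteq> j \<Longrightarrow> poly h (x b) = 0"
    and vj: "poly h (x j) \<noteq> 0"
  shows "w j \<noteq> 0"
proof
  assume w0: "w j = 0"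
  have "Qd N x w h = 0" unfolding Qd_def by (rule sum.neutral) (use vb w0 in auto)
  then have "integral {-1..1} (poly h) = 0" using ex unfolding Ip_def by simp
  moreover have "continuous_on {-1..1} (poly h)"
    using continuous_on_poly[OF continuous_on_id, of "{-1..1::real}" h] by simp
  ultimately have "\<forall>t\<in>{-1..1}. poly h t = 0" using integral_eq_0_iff[of "-1" 1 "poly h"] nonneg by simp
  then have sub: "{-1..1::real} \<subseteq> {t. poly h t = 0}" by auto
  have "h \<noteq> 0" using vj by auto
  then have "finite {t. poly h t = 0}" by (rule poly_roots_finite)
  then have "finite {-1..1::real}" using sub finite_subset by blast
  then show False using infinite_Icc[of "-1::real" 1] by simp
qed

definition Eset :: "nat \<Rightarrow> (nat \<Rightarrow> real) \<Rightarrow> nat \<Rightarrow> nat set" where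
  "Eset N x j = {b\<in>{0..N}-{j}. x b = 1 \<or> x b = -1}"
definition Iset :: "nat \<Rightarrow> (nat \<Rightarrow> real) \<Rightarrow> nat \<Rightarrow> nat set" where
  "Iset N x j = {b\<in>{0..N}-{j}. x b \<noteq> 1 \<and> x b \<noteq> -1}"

definition hnode :: "nat \<Rightarrow> (nat \<Rightarrow> real) \<Rightarrow> nat \<Rightarrow> real poly" where
  "hnode N x j = (\<Prod>b\<in>Eset N x j. [:1, - x b:]) * (\<Prod>b\<in>Iset N x j. [:- x b, 1:]) ^ 2"

lemma card_EI: "j \<le> N \<Longrightarrow> card (Eset N x j) + card (Iset N x j) = N"
proof -
  assume j: "j \<le> N"
  have "Eset N x j \<union> Iset N x j = {0..N} - {j}" "Eset N x j \<inter> Iset N x j = {}"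
    unfolding Eset_def Iset_def by auto
  then have "card (Eset N x j) + card (Iset N x j) = card ({0..N} - {j})"
    using card_Un_disjoint[of "Eset N x j" "Iset N x j"] unfolding Eset_def Iset_def by auto
  also have "\<dots> = N" using j by simp
  finally show ?thesis .
qed

lemma degree_hnode: "degree (hnode N x j) \<le> card (Eset N x j) + 2 * card (Iset N x j)"
proof -
  have fE: "finite (Eset N x j)" and fI: "finite (Iset N x j)" unfolding Eset_def Iset_def by auto
  have d1: "degree (\<Prod>b\<in>Eset N x j. [:1, - x b:]) \<le> card (Eset N x j)"
  proof -
    have "degree (\<Prod>b\<in>Eset N x j. [:1, - x b:]) \<le> (\<Sum>b\<in>Eset N x j. (degree \<circ> (\<lambda>b. [:1, - x b:])) b)"
      by (rule degree_prod_sum_le[OF fE])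
    also have "\<dots> \<le> (\<Sum>b\<in>Eset N x j. 1)" by (intro sum_mono) (simp add: deg_lin)
    finally show ?thesis by simp
  qed
  have d2: "degree (\<Prod>b\<in>Iset N x j. [:- x b, 1:]) \<le> card (Iset N x j)"
  proof -
    have "degree (\<Prod>b\<in>Iset N x j. [:- x b, 1:]) \<le> (\<Sum>b\<in>Iset N x j. (degree \<circ> (\<lambda>b. [:- x b, 1:])) b)"
      by (rule degree_prod_sum_le[OF fI])
    also have "\<dots> \<le> (\<Sum>b\<in>Iset N x j. 1)" by (intro sum_mono) simp
    finally show ?thesis by simp
  qed
  have "degree (hnode N x j) \<le> degree (\<Prod>b\<in>Eset N x j. [:1, - x b:]) + degree ((\<Prod>b\<in>Iset N x j. [:- x b, 1:]) ^ 2)"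
    unfolding hnode_def by (rule degree_mult_le)
  also have "\<dots> \<le> card (Eset N x j) + degree (\<Prod>b\<in>Iset N x j. [:- x b, 1:]) * 2"
    using d1 degree_power_le[of "\<Prod>b\<in>Iset N x j. [:- x b, 1:]" 2] by linarith
  finally show ?thesis using d2 by linarith
qed

lemma poly_hnode: "poly (hnode N x j) t = (\<Prod>b\<in>Eset N x j. 1 - x b * t) * (\<Prod>b\<in>Iset N x j. t - x b) ^ 2"
  unfolding hnode_def by (simp add: poly_prod algebra_simps)

lemma hnode_nonneg: "t \<in> {-1..1} \<Longrightarrow> poly (hnode N x j) t \<ge> 0"
proof -
  assume t: "t \<in> {-1..1}"
  have "(\<Prod>b\<in>Eset N x j. 1 - x b * t) \<ge> 0"
  proof (rule prod_nonneg)
    fix b assume "b \<in> Eset N x j"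
    then have "x b = 1 \<or> x b = -1" unfolding Eset_def by auto
    then show "0 \<le> 1 - x b * t" using t by auto
  qed
  then show ?thesis unfolding poly_hnode by simp
qed

lemma hnode_vanish:
  assumes "b \<le> N" "b \<noteq> j"
  shows "poly (hnode N x j) (x b) = 0"
proof (cases "x b = 1 \<or> x b = -1")
  case True
  then have "b \<in> Eset N x j" using assms unfolding Eset_def by auto
  moreover have "1 - x b * x b = 0" using True by auto
  ultimately have "(\<Prod>b'\<in>Eset N x j. 1 - x b' * x b) = 0"
    by (intro prod_zero) (auto simp: Eset_def)
  then show ?thesis unfolding poly_hnode by simp
next
  case False
  then have "b \<in> Iset N x j" using assms unfolding Iset_def by auto
  then have "(\<Prod>b'\<in>Iset N x j. x b - x b') = 0"
    by (intro prod_zero) (auto simp: Iset_def)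
  then show ?thesis unfolding poly_hnode by simp
qed

lemma hnode_node:
  assumes inj: "inj_on x {0..N}" and j: "j \<le> N"
  shows "poly (hnode N x j) (x j) \<noteq> 0"
proof -
  have ne: "x b \<noteq> x j" if "b \<in> {0..N} - {j}" for b
    using inj_on_eq_iff[OF inj] that j by auto
  have "(\<Prod>b\<in>Eset N x j. 1 - x b * x j) \<noteq> 0"
  proof -
    have "1 - x b * x j \<noteq> 0" if "b \<in> Eset N x j" for b
    proof
      assume "1 - x b * x j = 0"
      moreover have "x b = 1 \<or> x b = -1" "x b \<noteq> x j" using that ne unfolding Eset_def by auto
      ultimately show False by auto
    qed
    then show ?thesis by (simp add: Eset_def)
  qed
  moreover have "(\<Prod>b\<in>Iset N x j. x j - x b) \<noteq> 0"
  proof -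
    have "x j - x b \<noteq> 0" if "b \<in> Iset N x j" for b
      using ne[of b] that unfolding Iset_def by auto
    then show ?thesis by (simp add: Iset_def)
  qed
  ultimately show ?thesis unfolding poly_hnode by simp
qed

lemma rule_facts:
  assumes rule: "gauss_legendre N x w \<or> gauss_lobatto N x w" and N1: "N \<ge> 1"
  shows "interp_rule N x w" and "\<And>p. degree p < 2*N \<Longrightarrow> Ip p = Qd N x w p"
    and "\<And>j. j \<le> N \<Longrightarrow> w j \<noteq> 0"
proof -
  show ir: "interp_rule N x w" using rule unfolding gauss_legendre_def gauss_lobatto_def by auto
  have inj: "inj_on x {0..N}" using ir unfolding interp_rule_def by simp
  show "Ip p = Qd N x w p" if "degree p < 2*N" for p
    using rule GL_exact[of N x w p] GLL_exact[OF _ N1, of x w p] that by auto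
  show "w j \<noteq> 0" if j: "j \<le> N" for j
  proof (rule weight_nonzero[where h="hnode N x j"])
    show "j \<le> N" by (rule j)
    show "\<And>t. t \<in> {-1..1} \<Longrightarrow> poly (hnode N x j) t \<ge> 0" by (rule hnode_nonneg)
    show "\<And>b. b \<le> N \<Longrightarrow> b \<noteq> j \<Longrightarrow> poly (hnode N x j) (x b) = 0" by (rule hnode_vanish)
    show "poly (hnode N x j) (x j) \<noteq> 0" by (rule hnode_node[OF inj j])
    have dh: "degree (hnode N x j) \<le> N + card (Iset N x j)" using degree_hnode[of N x j] card_EI[OF j, of x] by linarith
    show "Ip (hnode N x j) = Qd N x w (hnode N x j)"
    proof (cases "gauss_legendre N x w")
      case True
      have "card (Iset N x j) \<le> N" using card_EI[OF j, of x] by linarith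
      then show ?thesis using GL_exact[OF True] dh by simp
    next
      case False
      then have GLL: "gauss_lobatto N x w" using rule by simp
      then have S: "{-1, 1} \<subseteq> x ` {0..N}" unfolding gauss_lobatto_def by auto
      then obtain b1 b2 where b: "b1 \<le> N" "x b1 = 1" "b2 \<le> N" "x b2 = -1" by force
      then have "b1 \<in> Eset N x j \<or> b2 \<in> Eset N x j" unfolding Eset_def by force
      moreover have "finite (Eset N x j)" unfolding Eset_def by simp
      ultimately have "card (Eset N x j) \<ge> 1" by (metis card_0_eq empty_iff less_one not_le)
      then have "degree (hnode N x j) < 2*N" using dh card_EI[OF j, of x] by linarith
      then show ?thesis using GLL_exact[OF GLL N1] by simp
    qed
  qed
qed

definition LS :: "nat \<Rightarrow> (nat \<Rightarrow> 'a set) \<Rightarrow> 'a list set" where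
  "LS d A = {\<alpha>. length \<alpha> = d \<and> (\<forall>l<d. \<alpha> ! l \<in> A l)}"

lemma LS_0: "LS 0 A = {[]}" unfolding LS_def by auto

lemma LS_Suc: "LS (Suc d) A = (\<lambda>(\<beta>,b). \<beta> @ [b]) ` (LS d A \<times> A d)"
proof (intro set_eqI iffI)
  fix \<alpha> assume a: "\<alpha> \<in> LS (Suc d) A"
  then have len: "length \<alpha> = Suc d" unfolding LS_def by simp
  then obtain \<beta> b where ab: "\<alpha> = \<beta> @ [b]" by (metis length_Suc_conv_rev)
  have "\<beta> \<in> LS d A" using a len unfolding ab LS_def by (auto simp: nth_append) (metis less_Suc_eq nth_append)
  moreover have "b \<in> A d" using a len unfolding ab LS_def by (auto simp: nth_append)
  ultimately show "\<alpha> \<in> (\<lambda>(\<beta>,b). \<beta> @ [b]) ` (LS d A \<times> A d)" using ab by auto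
next
  fix \<alpha> assume "\<alpha> \<in> (\<lambda>(\<beta>,b). \<beta> @ [b]) ` (LS d A \<times> A d)"
  then obtain \<beta> b where "\<alpha> = \<beta> @ [b]" "\<beta> \<in> LS d A" "b \<in> A d" by auto
  then show "\<alpha> \<in> LS (Suc d) A" unfolding LS_def by (auto simp: nth_append less_Suc_eq)
qed

lemma finite_LS: "(\<And>l. l < d \<Longrightarrow> finite (A l)) \<Longrightarrow> finite (LS d A)"
proof (induction d)
  case 0 then show ?case by (simp add: LS_0)
next
  case (Suc d) then show ?case by (simp add: LS_Suc)
qed

lemma sum_prod_LS:
  fixes f :: "nat \<Rightarrow> 'a \<Rightarrow> 'b::comm_semiring_1"
  shows "(\<And>l. l < d \<Longrightarrow> finite (A l)) \<Longrightarrow>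
    (\<Sum>\<alpha>\<in>LS d A. \<Prod>l<d. f l (\<alpha> ! l)) = (\<Prod>l<d. \<Sum>b\<in>A l. f l b)"
proof (induction d)
  case 0 then show ?case by (simp add: LS_0)
next
  case (Suc d)
  have fin: "finite (LS d A)" "finite (A d)" using Suc.prems by (auto intro: finite_LS)
  have inj: "inj_on (\<lambda>(\<beta>,b). \<beta> @ [b]) (LS d A \<times> A d)"
    by (rule inj_onI) auto
  have "(\<Sum>\<alpha>\<in>LS (Suc d) A. \<Prod>l<Suc d. f l (\<alpha> ! l))
      = (\<Sum>(\<beta>,b)\<in>LS d A \<times> A d. \<Prod>l<Suc d. f l ((\<beta> @ [b]) ! l))"
    unfolding LS_Suc by (subst sum.reindex[OF inj]) (simp add: case_prod_unfold)
  also have "\<dots> = (\<Sum>(\<beta>,b)\<in>LS d A \<times> A d. (\<Prod>l<d. f l (\<beta> ! l)) * f d b)"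
  proof (intro sum.cong refl, clarify)
    fix \<beta> b assume "\<beta> \<in> LS d A"
    then have len: "length \<beta> = d" unfolding LS_def by simp
    have "(\<Prod>l<Suc d. f l ((\<beta> @ [b]) ! l)) = (\<Prod>l<d. f l ((\<beta> @ [b]) ! l)) * f d b"
      using len by (simp add: nth_append)
    also have "(\<Prod>l<d. f l ((\<beta> @ [b]) ! l)) = (\<Prod>l<d. f l (\<beta> ! l))"
      using len by (intro prod.cong) (auto simp: nth_append)
    finally show "(\<Prod>l<Suc d. f l ((\<beta> @ [b]) ! l)) = (\<Prod>l<d. f l (\<beta> ! l)) * f d b" .
  qed
  also have "\<dots> = (\<Sum>\<beta>\<in>LS d A. \<Prod>l<d. f l (\<beta> ! l)) * (\<Sum>b\<in>A d. f d b)"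
    by (simp add: sum_product sum.cartesian_product)
  also have "\<dots> = (\<Prod>l<Suc d. \<Sum>b\<in>A l. f l b)" using Suc by simp
  finally show ?case .
qed

lemma vidx_LS: "vidx d N = LS d (\<lambda>_. {0..N})"
  unfolding vidx_def LS_def subset_eq all_set_conv_all_nth by (rule Collect_cong) blast

lemma face_set_LS: "face_set d N k s = LS d (\<lambda>l. if l = k then {0} else {0..N})" if "k < d"
proof (intro set_eqI iffI)
  fix \<alpha> assume "\<alpha> \<in> face_set d N k s"
  then have "\<alpha> \<in> LS d (\<lambda>_. {0..N})" "\<alpha> ! k = 0" unfolding face_set_def vidx_LS by auto
  then show "\<alpha> \<in> LS d (\<lambda>l. if l = k then {0} else {0..N})" unfolding LS_def by auto
next
  fix \<alpha> assume a: "\<alpha> \<in> LS d (\<lambda>l. if l = k then {0} else {0..N})"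
  then have "\<alpha> ! k = 0" using that unfolding LS_def by fastforce
  moreover have "\<alpha> \<in> LS d (\<lambda>_. {0..N})" unfolding LS_def
  proof (intro CollectI conjI allI impI)
    show "length \<alpha> = d" using a unfolding LS_def by simp
    fix l assume "l < d"
    then have "\<alpha> ! l \<in> (if l = k then {0} else {0..N})" using a unfolding LS_def by blast
    then show "\<alpha> ! l \<in> {0..N}" by (cases "l = k") auto
  qed
  ultimately show "\<alpha> \<in> face_set d N k s" unfolding face_set_def vidx_LS by simp
qed

lemma finite_vidx: "finite (vidx d N)" unfolding vidx_LS by (rule finite_LS) simp
lemma finite_face_set: "finite (face_set d N k s)"
  unfolding face_set_def using finite_vidx by simp

lemma prod_split:
  fixes F :: "nat \<Rightarrow> 'b::comm_monoid_mult"
  assumes "i < d"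
  shows "(\<Prod>l<d. if l = i then X else F l) = X * (\<Prod>l\<in>{..<d} - {i}. F l)"
proof -
  have "(\<Prod>l<d. if l = i then X else F l) = (if i = i then X else F i) * (\<Prod>l\<in>{..<d} - {i}. if l = i then X else F l)"
    using assms by (subst prod.remove[of _ i]) auto
  also have "(\<Prod>l\<in>{..<d} - {i}. if l = i then X else F l) = (\<Prod>l\<in>{..<d} - {i}. F l)"
    by (intro prod.cong) auto
  finally show ?thesis by simp
qed

lemma prod_split1:
  fixes F :: "nat \<Rightarrow> 'b::comm_monoid_mult"
  assumes "i < d"
  shows "(\<Prod>l<d. F l) = F i * (\<Prod>l\<in>{..<d} - {i}. F l)"
  using assms by (subst prod.remove[of _ i]) auto

lemma deriv_lagrange: "deriv (lagrange N x b) t = poly (pderiv (lagp N x b)) t"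
  unfolding lagrange_fun by (rule DERIV_imp_deriv) (rule poly_DERIV)

lemma pderiv_sum: "pderiv (\<Sum>a\<in>A. f a) = (\<Sum>a\<in>A. pderiv (f a))"
  using higher_pderiv_sum[of 1 f A] by simp

lemma monom_interp:
  assumes inj: "inj_on x {0..N}" and e: "e \<le> N"
  shows "monom 1 e = (\<Sum>b\<le>N. smult (x b ^ e) (lagp N x b))"
proof -
  have "degree (monom (1::real) e) \<le> N" using e by (simp add: degree_monom_eq)
  from interp[OF inj this] show ?thesis by (simp add: poly_monom)
qed

lemma interp1:
  assumes inj: "inj_on x {0..N}" and e: "e \<le> N"
  shows "(\<Sum>b\<le>N. lagrange N x b t * x b ^ e) = t ^ e"
proof -
  have "poly (monom 1 e) t = poly (\<Sum>b\<le>N. smult (x b ^ e) (lagp N x b)) t"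
    using monom_interp[OF inj e] by simp
  then show ?thesis by (simp add: poly_sum poly_monom poly_lagp mult.commute)
qed

lemma interp1_deriv:
  assumes inj: "inj_on x {0..N}" and e: "e \<le> N"
  shows "(\<Sum>b\<le>N. deriv (lagrange N x b) t * x b ^ e) = of_nat e * t ^ (e - 1)"
proof -
  have "poly (pderiv (monom 1 e)) t = poly (pderiv (\<Sum>b\<le>N. smult (x b ^ e) (lagp N x b))) t"
    using monom_interp[OF inj e] by simp
  then show ?thesis
    by (simp add: pderiv_sum pderiv_smult poly_sum poly_monom pderiv_monom deriv_lagrange mult.commute)
qed

lemma Q1D_row:
  assumes inj: "inj_on x {0..N}" and e: "e \<le> N"
  shows "(\<Sum>b\<le>N. Q1D N x w a b * x b ^ e) = w a * (of_nat e * x a ^ (e - 1))"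
proof -
  have "(\<Sum>b\<le>N. Q1D N x w a b * x b ^ e) = w a * (\<Sum>b\<le>N. deriv (lagrange N x b) (x a) * x b ^ e)"
    unfolding Q1D_def by (simp add: sum_distrib_left mult.assoc)
  then show ?thesis using interp1_deriv[OF inj e] by simp
qed

lemma M1D_row: "a \<le> N \<Longrightarrow> (\<Sum>b\<le>N. M1D w a b * f b) = w a * f a"
proof -
  assume a: "a \<le> N"
  have "(\<Sum>b\<le>N. M1D w a b * f b) = (\<Sum>b\<le>N. if b = a then w a * f a else 0)"
    by (intro sum.cong) (auto simp: M1D_def)
  then show ?thesis using a by simp
qed

lemma M1D_col: "a \<le> N \<Longrightarrow> (\<Sum>b\<le>N. M1D w b a * f b) = w a * f a"
proof -
  assume a: "a \<le> N"
  have "(\<Sum>b\<le>N. M1D w b a * f b) = (\<Sum>b\<le>N. if b = a then w a * f a else 0)"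
    by (intro sum.cong) (auto simp: M1D_def)
  then show ?thesis using a by simp
qed

lemma lag_node_sum:
  assumes inj: "inj_on x {0..N}" and a: "a \<le> N"
  shows "(\<Sum>b\<le>N. lagrange N x a (x b) * f b) = f a"
proof -
  have "(\<Sum>b\<le>N. lagrange N x a (x b) * f b) = (\<Sum>b\<le>N. if b = a then f b else 0)"
    using inj a by (intro sum.cong) (auto simp: lagrange_node)
  then show ?thesis using a by simp
qed

lemma Q1D_col:
  assumes inj: "inj_on x {0..N}" and ex: "\<And>p. degree p < 2*N \<Longrightarrow> Ip p = Qd N x w p"
    and N1: "N \<ge> 1" and a: "a \<le> N" and e: "e \<le> N"
  shows "(\<Sum>b\<le>N. Q1D N x w b a * x b ^ e)
         = lagrange N x a 1 - lagrange N x a (-1) * (-1) ^ e - w a * (of_nat e * x a ^ (e - 1))"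
proof -
  let ?L = "lagp N x a" and ?M = "monom (1::real) e"
  have dL: "degree ?L \<le> N" using degree_lagp[OF a] .
  have dM: "degree ?M \<le> e" by (simp add: degree_monom_le)
  have "(\<Sum>b\<le>N. Q1D N x w b a * x b ^ e) = Qd N x w (pderiv ?L * ?M)"
    unfolding Q1D_def Qd_def by (simp add: deriv_lagrange poly_monom mult.assoc)
  also have "\<dots> = Ip (pderiv ?L * ?M)"
  proof (rule ex[symmetric])
    have "degree (pderiv ?L * ?M) \<le> degree (pderiv ?L) + degree ?M" by (rule degree_mult_le)
    also have "\<dots> \<le> (N - 1) + e" using dL dM by (simp add: degree_pderiv add_mono)
    finally show "degree (pderiv ?L * ?M) < 2 * N" using N1 e by linarith
  qed
  also have "\<dots> = poly (?L * ?M) 1 - poly (?L * ?M) (-1) - Ip (?L * pderiv ?M)" by (rule Ip_parts)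
  also have "Ip (?L * pderiv ?M) = Qd N x w (?L * pderiv ?M)"
  proof (rule ex)
    have "degree (?L * pderiv ?M) \<le> degree ?L + degree (pderiv ?M)" by (rule degree_mult_le)
    also have "\<dots> \<le> N + (e - 1)" using dL dM by (simp add: degree_pderiv add_mono)
    finally show "degree (?L * pderiv ?M) < 2 * N" using N1 e by linarith
  qed
  also have "Qd N x w (?L * pderiv ?M) = (\<Sum>b\<le>N. lagrange N x a (x b) * (w b * (of_nat e * x b ^ (e - 1))))"
    unfolding Qd_def by (simp add: poly_lagp pderiv_monom poly_monom algebra_simps)
  also have "\<dots> = w a * (of_nat e * x a ^ (e - 1))" by (rule lag_node_sum[OF inj a])
  finally show ?thesis by (simp add: poly_lagp poly_monom)
qed

lemma face_1D:
  assumes inj: "inj_on x {0..N}" and a: "a \<le> N"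
  shows "(\<Sum>b\<le>N. lagrange N x a (x b) * w b * x b ^ e) = w a * x a ^ e"
  using lag_node_sum[OF inj a, of "\<lambda>b. w b * x b ^ e"] by (simp add: mult.assoc)

definition tmon :: "nat \<Rightarrow> nat list \<Rightarrow> (nat \<Rightarrow> real) \<Rightarrow> real" where
  "tmon d \<gamma> p = (\<Prod>j<d. p j ^ (\<gamma> ! j))"

definition dmono :: "nat \<Rightarrow> nat list \<Rightarrow> nat \<Rightarrow> (nat \<Rightarrow> real) \<Rightarrow> real" where
  "dmono d \<gamma> i p = (\<Prod>l<d. if l = i then of_nat (\<gamma> ! i) * p l ^ (\<gamma> ! i - 1) else p l ^ (\<gamma> ! l))"

lemma vidx_nth: "\<gamma> \<in> vidx d K \<Longrightarrow> l < d \<Longrightarrow> \<gamma> ! l \<le> K"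
  unfolding vidx_LS LS_def by auto

lemma mono_vnode: "tmon d \<gamma> (vnode d x \<beta>) = (\<Prod>l<d. x (\<beta> ! l) ^ (\<gamma> ! l))"
  unfolding tmon_def vnode_def by (intro prod.cong) auto

lemma sum_vidx_prod:
  fixes f :: "nat \<Rightarrow> nat \<Rightarrow> real"
  shows "(\<Sum>\<beta>\<in>vidx d N. \<Prod>l<d. f l (\<beta> ! l)) = (\<Prod>l<d. \<Sum>b\<le>N. f l b)"
  unfolding vidx_LS by (subst sum_prod_LS) (auto simp: atLeast0AtMost)

lemma fidx_Sigma: "fidx_set d N = Sigma {..<d} (\<lambda>k. Sigma UNIV (\<lambda>s. face_set d N k s))"
  unfolding fidx_set_def by auto

lemma sum_fidx: "(\<Sum>f\<in>fidx_set d N. F f) = (\<Sum>k<d. \<Sum>s\<in>UNIV. \<Sum>\<alpha>\<in>face_set d N k s. F (k,s,\<alpha>))"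
proof -
  have "(\<Sum>k<d. \<Sum>s\<in>UNIV. \<Sum>\<alpha>\<in>face_set d N k s. F (k,s,\<alpha>)) = (\<Sum>k<d. \<Sum>p\<in>Sigma UNIV (\<lambda>s. face_set d N k s). F (k,p))"
    by (intro sum.cong refl) (simp add: sum.Sigma finite_face_set split_def)
  also have "\<dots> = (\<Sum>q\<in>Sigma {..<d} (\<lambda>k. Sigma UNIV (\<lambda>s. face_set d N k s)). F q)"
    by (simp add: sum.Sigma finite_face_set split_def)
  finally show ?thesis unfolding fidx_Sigma by simp
qed

lemma midx_Sigma: "midx_set d m = Sigma {..<d} (\<lambda>k. Sigma UNIV (\<lambda>s. {..<m k s}))"
  unfolding midx_set_def by auto

lemma sum_midx: "(\<Sum>\<mu>\<in>midx_set d m. F \<mu>) = (\<Sum>k<d. \<Sum>s\<in>UNIV. \<Sum>j<m k s. F (k,s,j))"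
proof -
  have "(\<Sum>k<d. \<Sum>s\<in>UNIV. \<Sum>j<m k s. F (k,s,j)) = (\<Sum>k<d. \<Sum>p\<in>Sigma UNIV (\<lambda>s. {..<m k s}). F (k,p))"
    by (intro sum.cong refl) (simp add: sum.Sigma split_def)
  also have "\<dots> = (\<Sum>q\<in>Sigma {..<d} (\<lambda>k. Sigma UNIV (\<lambda>s. {..<m k s})). F q)"
    by (simp add: sum.Sigma split_def)
  finally show ?thesis unfolding midx_Sigma by simp
qed

lemma poly_bound:
  fixes p :: "real poly"
  assumes "degree p \<le> M"
  shows "poly p t = (\<Sum>e\<le>M. coeff p e * t ^ e)"
proof -
  have "poly p t = (\<Sum>e\<le>degree p. coeff p e * t ^ e)" by (rule poly_altdef)
  also have "\<dots> = (\<Sum>e\<le>M. coeff p e * t ^ e)"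
    using assms by (intro sum.mono_neutral_left) (auto simp: coeff_eq_0)
  finally show ?thesis .
qed

lemma Ip_expand:
  fixes p :: "real poly"
  assumes "degree p \<le> M"
  shows "Ip p = (\<Sum>e\<le>M. coeff p e * integral {-1..1} (\<lambda>t::real. t ^ e))"
proof -
  have "poly p = poly (\<Sum>e\<le>M. smult (coeff p e) (monom 1 e))"
    by (rule ext) (simp add: poly_sum poly_monom poly_bound[OF assms])
  then have "p = (\<Sum>e\<le>M. smult (coeff p e) (monom 1 e))" using poly_eq_poly_eq_iff by blast
  then have "Ip p = Ip (\<Sum>e\<le>M. smult (coeff p e) (monom 1 e))" by simp
  also have "\<dots> = (\<Sum>e\<le>M. coeff p e * Ip (monom 1 e))" by (simp add: Ip_sum Ip_smult)
  also have "\<dots> = (\<Sum>e\<le>M. coeff p e * integral {-1..1} (\<lambda>t::real. t ^ e))"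
  proof -
    have "poly (monom 1 e) = (\<lambda>t::real. t ^ e)" for e by (auto simp: poly_monom)
    then show ?thesis unfolding Ip_def by simp
  qed
  finally show ?thesis .
qed

lemma prod_L_to_d:
  fixes F :: "nat \<Rightarrow> real"
  assumes "k < d"
  shows "(\<Prod>l\<in>{..<d} - {k}. F l) = (\<Prod>l<d. if l = k then 1 else F l)"
  using prod_split[OF assms, of 1 F] by simp

lemma expand_L:
  fixes f :: "nat \<Rightarrow> nat \<Rightarrow> real"
  assumes k: "k < d"
  shows "(\<Prod>l\<in>{..<d} - {k}. \<Sum>e\<le>M. f l e)
       = (\<Sum>\<gamma>\<in>LS d (\<lambda>l. if l = k then {0} else {0..M}). \<Prod>l\<in>{..<d} - {k}. f l (\<gamma> ! l))"
proof -
  have "(\<Prod>l\<in>{..<d} - {k}. \<Sum>e\<le>M. f l e) = (\<Prod>l<d. if l = k then 1 else \<Sum>e\<le>M. f l e)"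
    by (rule prod_L_to_d[OF k])
  also have "\<dots> = (\<Prod>l<d. \<Sum>e\<in>(if l = k then {0} else {0..M}). if l = k then 1 else f l e)"
    by (intro prod.cong refl) (auto simp: atLeast0AtMost)
  also have "\<dots> = (\<Sum>\<gamma>\<in>LS d (\<lambda>l. if l = k then {0} else {0..M}). \<Prod>l<d. if l = k then 1 else f l (\<gamma> ! l))"
    by (rule sum_prod_LS[symmetric]) auto
  also have "\<dots> = (\<Sum>\<gamma>\<in>LS d (\<lambda>l. if l = k then {0} else {0..M}). \<Prod>l\<in>{..<d} - {k}. f l (\<gamma> ! l))"
    by (intro sum.cong refl) (rule prod_L_to_d[OF k, symmetric])
  finally show ?thesis .
qed

lemma LS_sub_vidx: "LS d (\<lambda>l. if l = k then {0} else {0..M}) \<subseteq> vidx d M"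
proof
  fix \<gamma> assume a: "\<gamma> \<in> LS d (\<lambda>l. if l = k then {0} else {0..M})"
  show "\<gamma> \<in> vidx d M" unfolding vidx_LS LS_def
  proof (intro CollectI conjI allI impI)
    show "length \<gamma> = d" using a unfolding LS_def by simp
    fix l assume "l < d"
    then have "\<gamma> ! l \<in> (if l = k then {0} else {0..M})" using a unfolding LS_def by blast
    then show "\<gamma> ! l \<in> {0..M}" by (cases "l = k") auto
  qed
qed

lemma GE:
  fixes wt :: "'a \<Rightarrow> real" and pt :: "'a \<Rightarrow> nat \<Rightarrow> real"
  assumes fq: "face_quad_exact d k M S wt pt" and S: "finite S" and k: "k < d"
    and dP: "\<And>l. l \<in> {..<d} - {k} \<Longrightarrow> degree (P l) \<le> M"
  shows "(\<Sum>s\<in>S. wt s * (\<Prod>l\<in>{..<d} - {k}. poly (P l) (pt s l))) = (\<Prod>l\<in>{..<d} - {k}. Ip (P l))"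
proof -
  let ?L = "{..<d} - {k}"
  let ?G = "LS d (\<lambda>l. if l = k then {0} else {0..M})"
  have fG: "finite ?G" by (rule finite_LS) auto
  have "(\<Sum>s\<in>S. wt s * (\<Prod>l\<in>?L. poly (P l) (pt s l)))
      = (\<Sum>s\<in>S. wt s * (\<Prod>l\<in>?L. \<Sum>e\<le>M. coeff (P l) e * pt s l ^ e))"
  proof (intro sum.cong refl arg_cong2[where f="(*)"] prod.cong)
    fix s l assume "l \<in> ?L"
    show "poly (P l) (pt s l) = (\<Sum>e\<le>M. coeff (P l) e * pt s l ^ e)" by (rule poly_bound[OF dP]) fact
  qed
  also have "\<dots> = (\<Sum>s\<in>S. wt s * (\<Sum>\<gamma>\<in>?G. \<Prod>l\<in>?L. coeff (P l) (\<gamma> ! l) * pt s l ^ (\<gamma> ! l)))"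
    by (subst expand_L[OF k]) (rule refl)
  also have "\<dots> = (\<Sum>\<gamma>\<in>?G. (\<Prod>l\<in>?L. coeff (P l) (\<gamma> ! l)) * (\<Sum>s\<in>S. wt s * (\<Prod>l\<in>?L. pt s l ^ (\<gamma> ! l))))"
  proof -
    have "(\<Sum>s\<in>S. wt s * (\<Sum>\<gamma>\<in>?G. \<Prod>l\<in>?L. coeff (P l) (\<gamma> ! l) * pt s l ^ (\<gamma> ! l)))
        = (\<Sum>s\<in>S. \<Sum>\<gamma>\<in>?G. (\<Prod>l\<in>?L. coeff (P l) (\<gamma> ! l)) * (wt s * (\<Prod>l\<in>?L. pt s l ^ (\<gamma> ! l))))"
      by (simp add: sum_distrib_left prod.distrib mult.left_commute)
    also have "\<dots> = (\<Sum>\<gamma>\<in>?G. \<Sum>s\<in>S. (\<Prod>l\<in>?L. coeff (P l) (\<gamma> ! l)) * (wt s * (\<Prod>l\<in>?L. pt s l ^ (\<gamma> ! l))))"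
      by (rule sum.swap)
    also have "\<dots> = (\<Sum>\<gamma>\<in>?G. (\<Prod>l\<in>?L. coeff (P l) (\<gamma> ! l)) * (\<Sum>s\<in>S. wt s * (\<Prod>l\<in>?L. pt s l ^ (\<gamma> ! l))))"
      by (simp add: sum_distrib_left)
    finally show ?thesis .
  qed
  also have "\<dots> = (\<Sum>\<gamma>\<in>?G. (\<Prod>l\<in>?L. coeff (P l) (\<gamma> ! l)) * (\<Prod>l\<in>?L. integral {-1..1} (\<lambda>t::real. t ^ (\<gamma> ! l))))"
  proof (intro sum.cong refl arg_cong2[where f="(*)"])
    fix \<gamma> assume "\<gamma> \<in> ?G"
    then have "\<gamma> \<in> vidx d M" using LS_sub_vidx by blast
    then show "(\<Sum>s\<in>S. wt s * (\<Prod>l\<in>?L. pt s l ^ (\<gamma> ! l))) = (\<Prod>l\<in>?L. integral {-1..1} (\<lambda>t::real. t ^ (\<gamma> ! l)))"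
      using fq unfolding face_quad_exact_def by blast
  qed
  also have "\<dots> = (\<Sum>\<gamma>\<in>?G. \<Prod>l\<in>?L. coeff (P l) (\<gamma> ! l) * integral {-1..1} (\<lambda>t::real. t ^ (\<gamma> ! l)))"
    by (simp add: prod.distrib)
  also have "\<dots> = (\<Prod>l\<in>?L. \<Sum>e\<le>M. coeff (P l) e * integral {-1..1} (\<lambda>t::real. t ^ e))"
    by (rule expand_L[OF k, symmetric])
  also have "\<dots> = (\<Prod>l\<in>?L. Ip (P l))"
  proof (intro prod.cong refl)
    fix l assume "l \<in> ?L"
    then show "(\<Sum>e\<le>M. coeff (P l) e * integral {-1..1} (\<lambda>t::real. t ^ e)) = Ip (P l)"
      using Ip_expand[OF dP] by simp
  qed
  finally show ?thesis .
qed

locale setting =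
  fixes d N K :: nat and x w :: "nat \<Rightarrow> real"
  assumes inj: "inj_on x {0..N}"
    and ex: "\<And>p. degree p < 2*N \<Longrightarrow> Ip p = Qd N x w p"
    and wnz: "\<And>j. j \<le> N \<Longrightarrow> w j \<noteq> 0"
    and N1: "N \<ge> 1"
    and KN: "K \<le> N"
begin

lemma F1:
  assumes g: "\<gamma> \<in> vidx d K"
  shows "(\<Sum>\<beta>\<in>vidx d N. lag_tensor N x {..<d} \<beta> p * tmon d \<gamma> (vnode d x \<beta>)) = tmon d \<gamma> p"
proof -
  have "(\<Sum>\<beta>\<in>vidx d N. lag_tensor N x {..<d} \<beta> p * tmon d \<gamma> (vnode d x \<beta>))
      = (\<Sum>\<beta>\<in>vidx d N. \<Prod>l<d. lagrange N x (\<beta> ! l) (p l) * x (\<beta> ! l) ^ (\<gamma> ! l))"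
    unfolding lag_tensor_def mono_vnode by (simp add: prod.distrib)
  also have "\<dots> = (\<Prod>l<d. \<Sum>b\<le>N. lagrange N x b (p l) * x b ^ (\<gamma> ! l))"
    by (rule sum_vidx_prod)
  also have "\<dots> = (\<Prod>l<d. p l ^ (\<gamma> ! l))"
  proof (intro prod.cong refl interp1[OF inj])
    fix l assume "l \<in> {..<d}"
    then show "\<gamma> ! l \<le> N" using vidx_nth[OF g, of l] KN by simp
  qed
  finally show ?thesis unfolding tmon_def .
qed

lemma F4:
  assumes g: "\<gamma> \<in> vidx d K" and a: "\<alpha> \<in> vidx d N" and i: "i < d"
  shows "(\<Sum>\<beta>\<in>vidx d N. Qvol d N x w i \<alpha> \<beta> * tmon d \<gamma> (vnode d x \<beta>))
       = (\<Prod>l<d. if l = i then w (\<alpha> ! i) * (of_nat (\<gamma> ! i) * x (\<alpha> ! i) ^ (\<gamma> ! i - 1))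
                           else w (\<alpha> ! l) * x (\<alpha> ! l) ^ (\<gamma> ! l))"
proof -
  have "(\<Sum>\<beta>\<in>vidx d N. Qvol d N x w i \<alpha> \<beta> * tmon d \<gamma> (vnode d x \<beta>))
      = (\<Sum>\<beta>\<in>vidx d N. \<Prod>l<d. (if l = i then Q1D N x w (\<alpha> ! l) (\<beta> ! l) else M1D w (\<alpha> ! l) (\<beta> ! l)) * x (\<beta> ! l) ^ (\<gamma> ! l))"
    unfolding Qvol_def mono_vnode by (simp add: prod.distrib)
  also have "\<dots> = (\<Prod>l<d. \<Sum>b\<le>N. (if l = i then Q1D N x w (\<alpha> ! l) b else M1D w (\<alpha> ! l) b) * x b ^ (\<gamma> ! l))"
    by (rule sum_vidx_prod)
  also have "\<dots> = (\<Prod>l<d. if l = i then w (\<alpha> ! i) * (of_nat (\<gamma> ! i) * x (\<alpha> ! i) ^ (\<gamma> ! i - 1))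
                           else w (\<alpha> ! l) * x (\<alpha> ! l) ^ (\<gamma> ! l))"
  proof (intro prod.cong refl)
    fix l assume l: "l \<in> {..<d}"
    have al: "\<alpha> ! l \<le> N" using vidx_nth[OF a] l by auto
    have gl: "\<gamma> ! l \<le> N" using vidx_nth[OF g, of l] l KN by simp
    show "(\<Sum>b\<le>N. (if l = i then Q1D N x w (\<alpha> ! l) b else M1D w (\<alpha> ! l) b) * x b ^ (\<gamma> ! l)) =
      (if l = i then w (\<alpha> ! i) * (of_nat (\<gamma> ! i) * x (\<alpha> ! i) ^ (\<gamma> ! i - 1)) else w (\<alpha> ! l) * x (\<alpha> ! l) ^ (\<gamma> ! l))"
      using Q1D_row[OF inj gl, of w "\<alpha> ! l"] M1D_row[OF al, of w "\<lambda>b. x b ^ (\<gamma> ! l)"] by (cases "l = i") auto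
  qed
  finally show ?thesis .
qed

lemma F5:
  assumes g: "\<gamma> \<in> vidx d K" and a: "\<alpha> \<in> vidx d N" and i: "i < d"
  shows "(\<Sum>\<beta>\<in>vidx d N. Qvol d N x w i \<beta> \<alpha> * tmon d \<gamma> (vnode d x \<beta>))
       = (\<Prod>l<d. if l = i then lagrange N x (\<alpha> ! i) 1 - lagrange N x (\<alpha> ! i) (-1) * (-1) ^ (\<gamma> ! i)
                               - w (\<alpha> ! i) * (of_nat (\<gamma> ! i) * x (\<alpha> ! i) ^ (\<gamma> ! i - 1))
                           else w (\<alpha> ! l) * x (\<alpha> ! l) ^ (\<gamma> ! l))"
proof -
  have "(\<Sum>\<beta>\<in>vidx d N. Qvol d N x w i \<beta> \<alpha> * tmon d \<gamma> (vnode d x \<beta>))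
      = (\<Sum>\<beta>\<in>vidx d N. \<Prod>l<d. (if l = i then Q1D N x w (\<beta> ! l) (\<alpha> ! l) else M1D w (\<beta> ! l) (\<alpha> ! l)) * x (\<beta> ! l) ^ (\<gamma> ! l))"
    unfolding Qvol_def mono_vnode by (simp add: prod.distrib)
  also have "\<dots> = (\<Prod>l<d. \<Sum>b\<le>N. (if l = i then Q1D N x w b (\<alpha> ! l) else M1D w b (\<alpha> ! l)) * x b ^ (\<gamma> ! l))"
    by (rule sum_vidx_prod)
  also have "\<dots> = (\<Prod>l<d. if l = i then lagrange N x (\<alpha> ! i) 1 - lagrange N x (\<alpha> ! i) (-1) * (-1) ^ (\<gamma> ! i)
                               - w (\<alpha> ! i) * (of_nat (\<gamma> ! i) * x (\<alpha> ! i) ^ (\<gamma> ! i - 1))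
                           else w (\<alpha> ! l) * x (\<alpha> ! l) ^ (\<gamma> ! l))"
  proof (intro prod.cong refl)
    fix l assume l: "l \<in> {..<d}"
    have al: "\<alpha> ! l \<le> N" using vidx_nth[OF a] l by auto
    have gl: "\<gamma> ! l \<le> N" using vidx_nth[OF g, of l] l KN by simp
    show "(\<Sum>b\<le>N. (if l = i then Q1D N x w b (\<alpha> ! l) else M1D w b (\<alpha> ! l)) * x b ^ (\<gamma> ! l)) =
      (if l = i then lagrange N x (\<alpha> ! i) 1 - lagrange N x (\<alpha> ! i) (-1) * (-1) ^ (\<gamma> ! i)
                               - w (\<alpha> ! i) * (of_nat (\<gamma> ! i) * x (\<alpha> ! i) ^ (\<gamma> ! i - 1))
                           else w (\<alpha> ! l) * x (\<alpha> ! l) ^ (\<gamma> ! l))"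
      using Q1D_col[OF inj ex N1 al gl] M1D_col[OF al, of w "\<lambda>b. x b ^ (\<gamma> ! l)"] by (cases "l = i") auto
  qed
  finally show ?thesis .
qed


lemma Fb:
  assumes g: "\<gamma> \<in> vidx d K" and a: "\<alpha> \<in> vidx d N" and i: "i < d"
  shows "(\<Sum>f\<in>fidx_set d N. Emat d N x f \<alpha> * (nrm i (fst f) (fst (snd f)) * fweight d w f) * tmon d \<gamma> (fnode d x f))
       = (\<Prod>l<d. if l = i then lagrange N x (\<alpha> ! i) 1 - lagrange N x (\<alpha> ! i) (-1) * (-1) ^ (\<gamma> ! i)
                           else w (\<alpha> ! l) * x (\<alpha> ! l) ^ (\<gamma> ! l))"
proof -
  define W where "W l = w (\<alpha> ! l) * x (\<alpha> ! l) ^ (\<gamma> ! l)" for l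
  define T where "T s = (\<Sum>\<alpha>'\<in>face_set d N i s. Emat d N x (i, s, \<alpha>') \<alpha> * fweight d w (i, s, \<alpha>') * tmon d \<gamma> (fnode d x (i, s, \<alpha>')))" for s
  have T: "T s = (\<Prod>l<d. if l = i then lagrange N x (\<alpha> ! i) (sgn_face s) * sgn_face s ^ (\<gamma> ! i) else W l)" for s
  proof -
    define \<phi> where "\<phi> l b = (if l = i then lagrange N x (\<alpha> ! i) (sgn_face s) * sgn_face s ^ (\<gamma> ! i)
                   else lagrange N x (\<alpha> ! l) (x b) * w b * x b ^ (\<gamma> ! l))" for l b
    have "T s = (\<Sum>\<alpha>'\<in>face_set d N i s. \<Prod>l<d. \<phi> l (\<alpha>' ! l))"
      unfolding T_def
    proof (intro sum.cong refl)
      fix \<alpha>' assume "\<alpha>' \<in> face_set d N i s"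
      have e1: "Emat d N x (i, s, \<alpha>') \<alpha> = (\<Prod>l<d. if l = i then lagrange N x (\<alpha> ! i) (sgn_face s) else lagrange N x (\<alpha> ! l) (x (\<alpha>' ! l)))"
        unfolding Emat_def lag_tensor_def fnode_def by (intro prod.cong) auto
      have e2: "fweight d w (i, s, \<alpha>') = (\<Prod>l<d. if l = i then 1 else w (\<alpha>' ! l))"
        unfolding fweight_def using prod_split[OF i, of 1 "\<lambda>l. w (\<alpha>' ! l)"] by simp
      have e3: "tmon d \<gamma> (fnode d x (i, s, \<alpha>')) = (\<Prod>l<d. if l = i then sgn_face s ^ (\<gamma> ! i) else x (\<alpha>' ! l) ^ (\<gamma> ! l))"
        unfolding tmon_def fnode_def by (intro prod.cong) auto
      show "Emat d N x (i, s, \<alpha>') \<alpha> * fweight d w (i, s, \<alpha>') * tmon d \<gamma> (fnode d x (i, s, \<alpha>')) = (\<Prod>l<d. \<phi> l (\<alpha>' ! l))"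
        unfolding e1 e2 e3 prod.distrib[symmetric] \<phi>_def by (intro prod.cong) auto
    qed
    also have "\<dots> = (\<Prod>l<d. \<Sum>b\<in>(if l = i then {0} else {0..N}). \<phi> l b)"
      unfolding face_set_LS[OF i] by (rule sum_prod_LS) auto
    also have "\<dots> = (\<Prod>l<d. if l = i then lagrange N x (\<alpha> ! i) (sgn_face s) * sgn_face s ^ (\<gamma> ! i) else W l)"
    proof (intro prod.cong refl)
      fix l assume l: "l \<in> {..<d}"
      have al: "\<alpha> ! l \<le> N" using vidx_nth[OF a, of l] l by simp
      show "(\<Sum>b\<in>(if l = i then {0} else {0..N}). \<phi> l b) = (if l = i then lagrange N x (\<alpha> ! i) (sgn_face s) * sgn_face s ^ (\<gamma> ! i) else W l)"
        using face_1D[OF inj al, of w "\<gamma> ! l"] unfolding \<phi>_def W_def by (auto simp: atLeast0AtMost)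
    qed
    finally show ?thesis .
  qed
  have "(\<Sum>f\<in>fidx_set d N. Emat d N x f \<alpha> * (nrm i (fst f) (fst (snd f)) * fweight d w f) * tmon d \<gamma> (fnode d x f))
      = (\<Sum>k<d. \<Sum>s\<in>UNIV. \<Sum>\<alpha>'\<in>face_set d N k s. Emat d N x (k,s,\<alpha>') \<alpha> * (nrm i k s * fweight d w (k,s,\<alpha>')) * tmon d \<gamma> (fnode d x (k,s,\<alpha>')))"
    by (subst sum_fidx) simp
  also have "\<dots> = (\<Sum>k<d. if k = i then (\<Sum>s\<in>UNIV. sgn_face s * T s) else 0)"
  proof (intro sum.cong refl)
    fix k assume "k \<in> {..<d}"
    show "(\<Sum>s\<in>UNIV. \<Sum>\<alpha>'\<in>face_set d N k s. Emat d N x (k,s,\<alpha>') \<alpha> * (nrm i k s * fweight d w (k,s,\<alpha>')) * tmon d \<gamma> (fnode d x (k,s,\<alpha>')))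
        = (if k = i then (\<Sum>s\<in>UNIV. sgn_face s * T s) else 0)"
      unfolding T_def nrm_def by (cases "k = i") (auto simp: sum_distrib_left algebra_simps)
  qed
  also have "\<dots> = (\<Sum>s\<in>UNIV. sgn_face s * T s)" using i by simp
  also have "\<dots> = T True - T False" by (simp add: UNIV_bool sgn_face_def)
  also have "\<dots> = (\<Prod>l<d. if l = i then lagrange N x (\<alpha> ! i) 1 - lagrange N x (\<alpha> ! i) (-1) * (-1) ^ (\<gamma> ! i) else W l)"
    unfolding T prod_split[OF i] by (simp add: sgn_face_def algebra_simps)
  finally show ?thesis unfolding W_def .
qed

end

lemma face_set_vidx: "\<alpha> \<in> face_set d N k s \<Longrightarrow> \<alpha> \<in> vidx d N"
  unfolding face_set_def by simp

lemma sum_delta_ks: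
  fixes G :: real and s :: bool and d k :: nat
  assumes k: "k < d"
  shows "(\<Sum>k'<d. \<Sum>s'\<in>UNIV. if k' = k \<and> s' = s then G else 0) = G"
proof -
  have "(\<Sum>s'\<in>UNIV. if k' = k \<and> s' = s then G else 0) = (if k' = k then G else 0)" for k'
    by (cases s) (auto simp: UNIV_bool)
  then have "(\<Sum>k'<d. \<Sum>s'\<in>UNIV. if k' = k \<and> s' = s then G else 0) = (\<Sum>k'<d. if k' = k then G else 0)"
    by (intro sum.cong) auto
  also have "\<dots> = G" using k by (subst sum.delta) auto
  finally show ?thesis .
qed

lemma tmon_split: "k < d \<Longrightarrow> tmon d \<gamma> p = p k ^ (\<gamma> ! k) * (\<Prod>l\<in>{..<d} - {k}. p l ^ (\<gamma> ! l))"
  unfolding tmon_def by (rule prod_split1)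

context setting
begin

lemma F2:
  assumes g: "\<gamma> \<in> vidx d K" and mo: "mortar_on_faces d m y" and mu: "\<mu> \<in> midx_set d m"
  shows "(\<Sum>f\<in>fidx_set d N. Emf d N x y \<mu> f * tmon d \<gamma> (fnode d x f)) = tmon d \<gamma> (mpoint y \<mu>)"
proof -
  obtain k s j where mu_eq: "\<mu> = (k,s,j)" and k: "k < d" and j: "j < m k s"
    using mu unfolding midx_set_def by auto
  define p where "p = y k s j"
  have pk: "p k = sgn_face s" using mo k j unfolding mortar_on_faces_def p_def by blast
  define G where "G = (\<Sum>\<alpha>\<in>face_set d N k s. lag_tensor N x ({..<d} - {k}) \<alpha> p * tmon d \<gamma> (fnode d x (k,s,\<alpha>)))"
  have "(\<Sum>f\<in>fidx_set d N. Emf d N x y \<mu> f * tmon d \<gamma> (fnode d x f))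
      = (\<Sum>k'<d. \<Sum>s'\<in>UNIV. \<Sum>\<alpha>\<in>face_set d N k' s'. Emf d N x y \<mu> (k',s',\<alpha>) * tmon d \<gamma> (fnode d x (k',s',\<alpha>)))"
    by (subst sum_fidx) simp
  also have "\<dots> = (\<Sum>k'<d. \<Sum>s'\<in>UNIV. if k' = k \<and> s' = s then G else 0)"
    unfolding G_def Emf_def mu_eq mface_def mpoint_def p_def by (intro sum.cong refl) auto
  also have "\<dots> = G" by (rule sum_delta_ks[OF k])
  also have "G = (\<Sum>\<alpha>\<in>face_set d N k s. \<Prod>l<d. if l = k then sgn_face s ^ (\<gamma> ! k) else lagrange N x (\<alpha> ! l) (p l) * x (\<alpha> ! l) ^ (\<gamma> ! l))"
    unfolding G_def
  proof (intro sum.cong refl)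
    fix \<alpha> assume "\<alpha> \<in> face_set d N k s"
    have e1: "lag_tensor N x ({..<d} - {k}) \<alpha> p = (\<Prod>l<d. if l = k then 1 else lagrange N x (\<alpha> ! l) (p l))"
      unfolding lag_tensor_def by (rule prod_L_to_d[OF k])
    have e2: "tmon d \<gamma> (fnode d x (k,s,\<alpha>)) = (\<Prod>l<d. if l = k then sgn_face s ^ (\<gamma> ! k) else x (\<alpha> ! l) ^ (\<gamma> ! l))"
      unfolding tmon_def fnode_def by (intro prod.cong) auto
    show "lag_tensor N x ({..<d} - {k}) \<alpha> p * tmon d \<gamma> (fnode d x (k,s,\<alpha>)) =
        (\<Prod>l<d. if l = k then sgn_face s ^ (\<gamma> ! k) else lagrange N x (\<alpha> ! l) (p l) * x (\<alpha> ! l) ^ (\<gamma> ! l))"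
      unfolding e1 e2 prod.distrib[symmetric] by (intro prod.cong) auto
  qed
  also have "\<dots> = (\<Prod>l<d. \<Sum>b\<in>(if l = k then {0} else {0..N}). if l = k then sgn_face s ^ (\<gamma> ! k) else lagrange N x b (p l) * x b ^ (\<gamma> ! l))"
    unfolding face_set_LS[OF k] by (rule sum_prod_LS) auto
  also have "\<dots> = (\<Prod>l<d. if l = k then sgn_face s ^ (\<gamma> ! k) else p l ^ (\<gamma> ! l))"
  proof (intro prod.cong refl)
    fix l assume l: "l \<in> {..<d}"
    have gl: "\<gamma> ! l \<le> N" using vidx_nth[OF g, of l] l KN by simp
    show "(\<Sum>b\<in>(if l = k then {0} else {0..N}). if l = k then sgn_face s ^ (\<gamma> ! k) else lagrange N x b (p l) * x b ^ (\<gamma> ! l))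
        = (if l = k then sgn_face s ^ (\<gamma> ! k) else p l ^ (\<gamma> ! l))"
      using interp1[OF inj gl, of "p l"] by (cases "l = k") (auto simp: atLeast0AtMost)
  qed
  also have "\<dots> = tmon d \<gamma> p"
    unfolding tmon_def using pk by (intro prod.cong) auto
  finally show ?thesis unfolding mu_eq mpoint_def p_def by simp
qed

lemma F3:
  assumes g: "\<gamma> \<in> vidx d K" and mo: "mortar_on_faces d m y" and f: "f \<in> fidx_set d N"
    and fe: "\<forall>k<d. \<forall>s. face_quad_exact d k (N + Nf) (face_set d N k s)
                        (\<lambda>\<alpha>. fweight d w (k, s, \<alpha>)) (\<lambda>\<alpha>. fnode d x (k, s, \<alpha>))"
    and me: "\<forall>k<d. \<forall>s. face_quad_exact d k (N + Nm) {..<m k s} (om k s) (y k s)"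
    and KNf: "K \<le> Nf" and KNm: "K \<le> Nm"
  shows "(\<Sum>\<mu>\<in>midx_set d m. Emf d N x y \<mu> f * mweight om \<mu> * tmon d \<gamma> (mpoint y \<mu>))
       = fweight d w f * tmon d \<gamma> (fnode d x f)"
proof -
  obtain k s \<alpha> where f_eq: "f = (k,s,\<alpha>)" and k: "k < d" and a: "\<alpha> \<in> face_set d N k s"
    using f unfolding fidx_set_def by auto
  let ?L = "{..<d} - {k}"
  define P where "P l = lagp N x (\<alpha> ! l) * monom 1 (\<gamma> ! l)" for l
  have aN: "\<alpha> ! l \<le> N" if "l < d" for l using vidx_nth[OF face_set_vidx[OF a] that] .
  have gK: "\<gamma> ! l \<le> K" if "l < d" for l using vidx_nth[OF g that] .
  have dP: "degree (P l) \<le> N + K" if "l \<in> ?L" for l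
  proof -
    have d0: "degree (P l) \<le> degree (lagp N x (\<alpha> ! l)) + degree (monom (1::real) (\<gamma> ! l))"
      unfolding P_def by (rule degree_mult_le)
    have l: "l < d" using that by simp
    have "degree (monom (1::real) (\<gamma> ! l)) \<le> K" using gK[OF l] by (simp add: degree_monom_eq)
    moreover have "degree (lagp N x (\<alpha> ! l)) \<le> N" by (rule degree_lagp[OF aN[OF l]])
    ultimately have "degree (lagp N x (\<alpha> ! l)) + degree (monom (1::real) (\<gamma> ! l)) \<le> N + K" by simp
    with d0 show ?thesis by linarith
  qed
  have key: "lag_tensor N x ?L \<alpha> p * tmon d \<gamma> p = sgn_face s ^ (\<gamma> ! k) * (\<Prod>l\<in>?L. poly (P l) (p l))"
    if pk: "p k = sgn_face s" for p
    unfolding tmon_split[OF k] lag_tensor_def P_def pk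
    by (simp add: poly_lagp poly_monom prod.distrib mult_ac)
  have "(\<Sum>\<mu>\<in>midx_set d m. Emf d N x y \<mu> f * mweight om \<mu> * tmon d \<gamma> (mpoint y \<mu>))
      = (\<Sum>k'<d. \<Sum>s'\<in>UNIV. \<Sum>j<m k' s'. Emf d N x y (k',s',j) f * mweight om (k',s',j) * tmon d \<gamma> (mpoint y (k',s',j)))"
    by (subst sum_midx) simp
  also have "\<dots> = (\<Sum>k'<d. \<Sum>s'\<in>UNIV. if k' = k \<and> s' = s then
         (\<Sum>j<m k s. om k s j * (lag_tensor N x ?L \<alpha> (y k s j) * tmon d \<gamma> (y k s j))) else 0)"
    unfolding Emf_def f_eq mface_def mpoint_def mweight_def by (intro sum.cong refl) (auto simp: mult_ac)
  also have "\<dots> = (\<Sum>j<m k s. om k s j * (lag_tensor N x ?L \<alpha> (y k s j) * tmon d \<gamma> (y k s j)))"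
    by (rule sum_delta_ks[OF k])
  also have "\<dots> = sgn_face s ^ (\<gamma> ! k) * (\<Sum>j<m k s. om k s j * (\<Prod>l\<in>?L. poly (P l) (y k s j l)))"
  proof -
    have "lag_tensor N x ?L \<alpha> (y k s j) * tmon d \<gamma> (y k s j) = sgn_face s ^ (\<gamma> ! k) * (\<Prod>l\<in>?L. poly (P l) (y k s j l))"
      if "j \<in> {..<m k s}" for j
      using key[of "y k s j"] mo k that unfolding mortar_on_faces_def by auto
    then show ?thesis by (simp add: sum_distrib_left mult_ac)
  qed
  also have "(\<Sum>j<m k s. om k s j * (\<Prod>l\<in>?L. poly (P l) (y k s j l))) = (\<Prod>l\<in>?L. Ip (P l))"
  proof (rule GE[OF me[rule_format, OF k] _ k])
    fix l assume "l \<in> ?L" then show "degree (P l) \<le> N + Nm" using dP[of l] KNm by linarith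
  qed simp
  also have "(\<Prod>l\<in>?L. Ip (P l)) = (\<Sum>\<alpha>'\<in>face_set d N k s. fweight d w (k, s, \<alpha>') * (\<Prod>l\<in>?L. poly (P l) (fnode d x (k, s, \<alpha>') l)))"
  proof (rule GE[OF fe[rule_format, OF k] finite_face_set k, symmetric])
    fix l assume "l \<in> ?L" then show "degree (P l) \<le> N + Nf" using dP[of l] KNf by linarith
  qed
  also have "\<dots> = (\<Sum>\<alpha>'\<in>face_set d N k s. \<Prod>l<d. if l = k then 1 else w (\<alpha>' ! l) * (lagrange N x (\<alpha> ! l) (x (\<alpha>' ! l)) * x (\<alpha>' ! l) ^ (\<gamma> ! l)))"
  proof (intro sum.cong refl)
    fix \<alpha>' assume "\<alpha>' \<in> face_set d N k s"
    have "fweight d w (k, s, \<alpha>') * (\<Prod>l\<in>?L. poly (P l) (fnode d x (k, s, \<alpha>') l))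
        = (\<Prod>l\<in>?L. w (\<alpha>' ! l) * (lagrange N x (\<alpha> ! l) (x (\<alpha>' ! l)) * x (\<alpha>' ! l) ^ (\<gamma> ! l)))"
    proof -
      have fw: "fweight d w (k,s,\<alpha>') = (\<Prod>l\<in>?L. w (\<alpha>' ! l))" by (simp add: fweight_def)
      show ?thesis
        unfolding fw prod.distrib[symmetric]
        by (intro prod.cong refl) (auto simp: P_def fnode_def poly_lagp poly_monom)
    qed
    then show "fweight d w (k, s, \<alpha>') * (\<Prod>l\<in>?L. poly (P l) (fnode d x (k, s, \<alpha>') l))
        = (\<Prod>l<d. if l = k then 1 else w (\<alpha>' ! l) * (lagrange N x (\<alpha> ! l) (x (\<alpha>' ! l)) * x (\<alpha>' ! l) ^ (\<gamma> ! l)))"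
      using prod_L_to_d[OF k] by simp
  qed
  also have "\<dots> = (\<Prod>l<d. \<Sum>b\<in>(if l = k then {0} else {0..N}). if l = k then 1 else w b * (lagrange N x (\<alpha> ! l) (x b) * x b ^ (\<gamma> ! l)))"
    unfolding face_set_LS[OF k] by (rule sum_prod_LS) auto
  also have "\<dots> = (\<Prod>l<d. if l = k then 1 else w (\<alpha> ! l) * x (\<alpha> ! l) ^ (\<gamma> ! l))"
  proof (intro prod.cong refl)
    fix l assume l: "l \<in> {..<d}"
    show "(\<Sum>b\<in>(if l = k then {0} else {0..N}). if l = k then 1 else w b * (lagrange N x (\<alpha> ! l) (x b) * x b ^ (\<gamma> ! l)))
        = (if l = k then 1 else w (\<alpha> ! l) * x (\<alpha> ! l) ^ (\<gamma> ! l))"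
      using face_1D[OF inj aN[of l], of w "\<gamma> ! l"] l by (cases "l = k") (auto simp: atLeast0AtMost mult_ac)
  qed
  also have "\<dots> = (\<Prod>l\<in>?L. w (\<alpha> ! l) * x (\<alpha> ! l) ^ (\<gamma> ! l))"
    by (rule prod_L_to_d[OF k, symmetric])
  finally have "(\<Sum>\<mu>\<in>midx_set d m. Emf d N x y \<mu> f * mweight om \<mu> * tmon d \<gamma> (mpoint y \<mu>))
      = sgn_face s ^ (\<gamma> ! k) * (\<Prod>l\<in>?L. w (\<alpha> ! l) * x (\<alpha> ! l) ^ (\<gamma> ! l))" .
  also have "\<dots> = fweight d w f * tmon d \<gamma> (fnode d x f)"
  proof -
    have "tmon d \<gamma> (fnode d x f) = sgn_face s ^ (\<gamma> ! k) * (\<Prod>l\<in>?L. x (\<alpha> ! l) ^ (\<gamma> ! l))"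
      unfolding tmon_split[OF k] f_eq fnode_def by (auto intro!: prod.cong)
    then show ?thesis unfolding f_eq fweight_def by (simp add: prod.distrib mult_ac)
  qed
  finally show ?thesis .
qed

end

lemma deriv_tmon:
  assumes i: "i < d"
  shows "((\<lambda>t. tmon d \<gamma> (p(i := t))) has_real_derivative dmono d \<gamma> i p) (at (p i))"
proof -
  define R where "R = (\<Prod>l\<in>{..<d} - {i}. p l ^ (\<gamma> ! l))"
  have eq: "(\<lambda>t. tmon d \<gamma> (p(i := t))) = (\<lambda>t. R * t ^ (\<gamma> ! i))"
  proof
    fix t
    have "(\<Prod>l\<in>{..<d} - {i}. (p(i := t)) l ^ (\<gamma> ! l)) = R" unfolding R_def by (intro prod.cong) auto
    then show "tmon d \<gamma> (p(i := t)) = R * t ^ (\<gamma> ! i)" unfolding tmon_split[OF i] by simp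
  qed
  have "dmono d \<gamma> i p = (\<Prod>l<d. if l = i then of_nat (\<gamma> ! i) * p i ^ (\<gamma> ! i - 1) else p l ^ (\<gamma> ! l))"
    unfolding dmono_def by (intro prod.cong) auto
  then have dm: "dmono d \<gamma> i p = R * (real (\<gamma> ! i) * p i ^ (\<gamma> ! i - Suc 0))"
    unfolding prod_split[OF i] R_def by simp
  show ?thesis unfolding eq dm by (intro DERIV_cmult DERIV_pow)
qed

lemma partial_deriv_poly:
  assumes i: "i < d" and g: "\<And>p. g p = (\<Sum>\<gamma>\<in>G. c \<gamma> * tmon d \<gamma> p)"
  shows "partial_deriv g i p = (\<Sum>\<gamma>\<in>G. c \<gamma> * dmono d \<gamma> i p)"
proof -
  have "((\<lambda>t. \<Sum>\<gamma>\<in>G. c \<gamma> * tmon d \<gamma> (p(i := t))) has_real_derivative (\<Sum>\<gamma>\<in>G. c \<gamma> * dmono d \<gamma> i p)) (at (p i))"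
    by (intro DERIV_sum DERIV_cmult deriv_tmon[OF i])
  moreover have "(\<lambda>t. g (p(i := t))) = (\<lambda>t. \<Sum>\<gamma>\<in>G. c \<gamma> * tmon d \<gamma> (p(i := t)))" using g by auto
  ultimately show ?thesis unfolding partial_deriv_def by (simp add: DERIV_imp_deriv)
qed

lemma finite_fidx: "finite (fidx_set d N)"
  unfolding fidx_Sigma by (intro finite_SigmaI) (auto intro: finite_face_set)

lemma finite_midx: "finite (midx_set d m)"
  unfolding midx_Sigma by (intro finite_SigmaI) auto

lemma sum_hidx:
  "(\<Sum>h\<in>hidx_set d N m. F h) = (\<Sum>\<beta>\<in>vidx d N. F (HV \<beta>)) + (\<Sum>f\<in>fidx_set d N. F (HF f)) + (\<Sum>\<mu>\<in>midx_set d m. F (HM \<mu>))"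
proof -
  have "(\<Sum>h\<in>hidx_set d N m. F h) = (\<Sum>h\<in>HV ` vidx d N \<union> HF ` fidx_set d N. F h) + (\<Sum>h\<in>HM ` midx_set d m. F h)"
    unfolding hidx_set_def by (rule sum.union_disjoint) (auto simp: finite_vidx finite_fidx finite_midx)
  also have "(\<Sum>h\<in>HV ` vidx d N \<union> HF ` fidx_set d N. F h) = (\<Sum>h\<in>HV ` vidx d N. F h) + (\<Sum>h\<in>HF ` fidx_set d N. F h)"
    by (rule sum.union_disjoint) (auto simp: finite_vidx finite_fidx)
  finally show ?thesis by (simp add: sum.reindex inj_on_def)
qed

lemma lin: "(\<Sum>a\<in>A. u a * (\<Sum>\<gamma>\<in>G. c \<gamma> * t \<gamma> a)) = (\<Sum>\<gamma>\<in>G. c \<gamma> * (\<Sum>a\<in>A. u a * (t \<gamma> a :: real)))"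
proof -
  have "(\<Sum>a\<in>A. u a * (\<Sum>\<gamma>\<in>G. c \<gamma> * t \<gamma> a)) = (\<Sum>a\<in>A. \<Sum>\<gamma>\<in>G. c \<gamma> * (u a * t \<gamma> a))"
    by (simp add: sum_distrib_left mult_ac)
  also have "\<dots> = (\<Sum>\<gamma>\<in>G. \<Sum>a\<in>A. c \<gamma> * (u a * t \<gamma> a))" by (rule sum.swap)
  also have "\<dots> = (\<Sum>\<gamma>\<in>G. c \<gamma> * (\<Sum>a\<in>A. u a * t \<gamma> a))" by (simp add: sum_distrib_left)
  finally show ?thesis .
qed

lemma Qim_VV: "Qim d N x w y om i (HV a) (HV b) = (1/2) * (Qvol d N x w i a b - Qvol d N x w i b a)"
  by (simp add: Qim_def)
lemma Qim_VF: "Qim d N x w y om i (HV a) (HF f) = (1/2) * (Emat d N x f a * (nrm i (fst f) (fst (snd f)) * fweight d w f))"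
  by (simp add: Qim_def)
lemma Qim_VM: "Qim d N x w y om i (HV a) (HM \<mu>) = 0"
  by (simp add: Qim_def)
lemma Qim_FV: "Qim d N x w y om i (HF f) (HV b) = (1/2) * (- (nrm i (fst f) (fst (snd f)) * fweight d w f) * Emat d N x f b)"
  by (simp add: Qim_def)
lemma Qim_FF: "Qim d N x w y om i (HF f) (HF f') = 0"
  by (simp add: Qim_def)
lemma Qim_FM: "Qim d N x w y om i (HF f) (HM \<mu>) = (1/2) * ((nrm i (fst f) (fst (snd f)) * fweight d w f) * Efm d N x w y om f \<mu>)"
  by (simp add: Qim_def)
lemma Qim_MV: "Qim d N x w y om i (HM \<mu>) (HV b) = 0"
  by (simp add: Qim_def)
lemma Qim_MF: "Qim d N x w y om i (HM \<mu>) (HF f) = (1/2) * (- (nrm i (fst \<mu>) (fst (snd \<mu>)) * mweight om \<mu>) * Emf d N x y \<mu> f)"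
  by (simp add: Qim_def)
lemma Qim_MM: "Qim d N x w y om i (HM \<mu>) (HM \<mu>') = (1/2) * (if \<mu> = \<mu>' then nrm i (fst \<mu>) (fst (snd \<mu>)) * mweight om \<mu> else 0)"
  by (simp add: Qim_def)

lemmas Qim_simps = Qim_VV Qim_VF Qim_VM Qim_FV Qim_FF Qim_FM Qim_MV Qim_MF Qim_MM

lemma prod_w_nz: "(\<And>l. l \<in> L \<Longrightarrow> w (\<alpha> ! l) \<noteq> (0::real)) \<Longrightarrow> finite L \<Longrightarrow> (\<Prod>l\<in>L. w (\<alpha> ! l)) \<noteq> 0"
  by (simp add: prod_zero_iff)

lemma half_lemma:
  fixes P Q G :: "'a \<Rightarrow> real" and E H :: "'b \<Rightarrow> real"
  shows "(\<Sum>\<beta>\<in>V. (1/2) * (P \<beta> - Q \<beta>) * G \<beta>) + (\<Sum>f\<in>F. (1/2) * E f * H f)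
       = (1/2) * ((\<Sum>\<beta>\<in>V. P \<beta> * G \<beta>) - (\<Sum>\<beta>\<in>V. Q \<beta> * G \<beta>) + (\<Sum>f\<in>F. E f * H f))"
proof -
  have a1: "(\<Sum>\<beta>\<in>V. (1/2) * (P \<beta> - Q \<beta>) * G \<beta>) = (\<Sum>\<beta>\<in>V. (1/2) * (P \<beta> * G \<beta>) - (1/2) * (Q \<beta> * G \<beta>))"
    by (intro sum.cong refl) (simp add: field_simps)
  have a2: "(\<Sum>\<beta>\<in>V. (1/2) * (P \<beta> * G \<beta>) - (1/2) * (Q \<beta> * G \<beta>)) = (1/2) * (\<Sum>\<beta>\<in>V. P \<beta> * G \<beta>) - (1/2) * (\<Sum>\<beta>\<in>V. Q \<beta> * G \<beta>)"
    by (simp add: sum_subtractf sum_distrib_left)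
  have a3: "(\<Sum>f\<in>F. (1/2) * E f * H f) = (1/2) * (\<Sum>f\<in>F. E f * H f)"
    unfolding sum_distrib_left by (intro sum.cong refl) (simp add: mult_ac)
  show ?thesis unfolding a1 a2 a3 by (simp add: distrib_left right_diff_distrib)
qed
lemma lin3:
  fixes c A B C :: "'a \<Rightarrow> real"
  shows "(1/2) * ((\<Sum>\<gamma>\<in>G. c \<gamma> * A \<gamma>) - (\<Sum>\<gamma>\<in>G. c \<gamma> * B \<gamma>) + (\<Sum>\<gamma>\<in>G. c \<gamma> * C \<gamma>))
       = (\<Sum>\<gamma>\<in>G. c \<gamma> * ((1/2) * (A \<gamma> - B \<gamma> + C \<gamma>)))"
proof -
  have "(\<Sum>\<gamma>\<in>G. c \<gamma> * ((1/2) * (A \<gamma> - B \<gamma> + C \<gamma>))) = (\<Sum>\<gamma>\<in>G. (1/2) * (c \<gamma> * A \<gamma>) - (1/2) * (c \<gamma> * B \<gamma>) + (1/2) * (c \<gamma> * C \<gamma>))"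
    by (intro sum.cong refl) (simp add: field_simps)
  also have "\<dots> = (1/2) * (\<Sum>\<gamma>\<in>G. c \<gamma> * A \<gamma>) - (1/2) * (\<Sum>\<gamma>\<in>G. c \<gamma> * B \<gamma>) + (1/2) * (\<Sum>\<gamma>\<in>G. c \<gamma> * C \<gamma>)"
    by (simp add: sum.distrib sum_subtractf sum_distrib_left)
  finally show ?thesis by (simp add: distrib_left right_diff_distrib)
qed

theorem mainTheorem2:
  fixes d N Nf Nm i :: nat
    and x w :: "nat \<Rightarrow> real"
    and m :: "nat \<Rightarrow> bool \<Rightarrow> nat"
    and y :: "nat \<Rightarrow> bool \<Rightarrow> nat \<Rightarrow> nat \<Rightarrow> real"
    and om :: "nat \<Rightarrow> bool \<Rightarrow> nat \<Rightarrow> real"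
    and g :: "(nat \<Rightarrow> real) \<Rightarrow> real"
  assumes dim: "d = 2 \<or> d = 3"
    and N1: "N \<ge> 1"
    and rule: "gauss_legendre N x w \<or> gauss_lobatto N x w"
    and mortar: "mortar_on_faces d m y"
    and face_exact: "\<forall>k<d. \<forall>s. face_quad_exact d k (N + Nf) (face_set d N k s)
                        (\<lambda>\<alpha>. fweight d w (k, s, \<alpha>)) (\<lambda>\<alpha>. fnode d x (k, s, \<alpha>))"
    and mortar_exact: "\<forall>k<d. \<forall>s. face_quad_exact d k (N + Nm) {..<m k s} (om k s) (y k s)"
    and gpoly: "tensor_poly d (min N (min Nf Nm)) g"
    and i: "i < d"
  shows "\<forall>\<alpha>\<in>vidx d N.
           (1 / Mvol d w \<alpha>) *
             (\<Sum>h\<in>hidx_set d N m. Prow d N x m y \<alpha> h *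
                (\<Sum>h'\<in>hidx_set d N m. Qim d N x w y om i h h' * gvec d x y g h'))
           = partial_deriv g i (vnode d x \<alpha>)"
proof
  fix \<alpha> assume a: "\<alpha> \<in> vidx d N"
  define K where "K = min N (min Nf Nm)"
  have KN: "K \<le> N" and KNf: "K \<le> Nf" and KNm: "K \<le> Nm" unfolding K_def by auto
  have ir: "interp_rule N x w" and ex: "\<And>p. degree p < 2*N \<Longrightarrow> Ip p = Qd N x w p"
    and wnz: "\<And>j. j \<le> N \<Longrightarrow> w j \<noteq> 0"
    using rule_facts[OF rule N1] by auto
  have inj: "inj_on x {0..N}" using ir unfolding interp_rule_def by simp
  interpret S: setting d N K x w
    using inj ex wnz N1 KN by unfold_locales auto
  obtain c where c: "\<And>p. g p = (\<Sum>\<gamma>\<in>vidx d K. c \<gamma> * tmon d \<gamma> p)"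
    using gpoly unfolding tensor_poly_def tmon_def K_def by blast
  let ?V = "vidx d N" and ?F = "fidx_set d N" and ?M = "midx_set d m" and ?G = "vidx d K"
  define gv where "gv = gvec d x y g"
  define Rh where "Rh h = (\<Sum>h'\<in>hidx_set d N m. Qim d N x w y om i h h' * gv h')" for h
  have gvV: "gv (HV \<beta>) = g (vnode d x \<beta>)" and gvF: "gv (HF f) = g (fnode d x f)"
    and gvM: "gv (HM \<mu>) = g (mpoint y \<mu>)" for \<beta> f \<mu> unfolding gv_def gvec_def by simp_all
  have L1: "(\<Sum>\<beta>\<in>?V. Emat d N x f \<beta> * g (vnode d x \<beta>)) = g (fnode d x f)" for f
  proof -
    have "(\<Sum>\<beta>\<in>?V. Emat d N x f \<beta> * g (vnode d x \<beta>))
        = (\<Sum>\<gamma>\<in>?G. c \<gamma> * (\<Sum>\<beta>\<in>?V. Emat d N x f \<beta> * tmon d \<gamma> (vnode d x \<beta>)))"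
      unfolding c by (rule lin)
    also have "\<dots> = (\<Sum>\<gamma>\<in>?G. c \<gamma> * tmon d \<gamma> (fnode d x f))"
      unfolding Emat_def by (intro sum.cong refl) (simp add: S.F1)
    finally show ?thesis using c by simp
  qed
  have L2: "(\<Sum>f\<in>?F. Emf d N x y \<mu> f * g (fnode d x f)) = g (mpoint y \<mu>)" if mu: "\<mu> \<in> ?M" for \<mu>
  proof -
    have "(\<Sum>f\<in>?F. Emf d N x y \<mu> f * g (fnode d x f))
        = (\<Sum>\<gamma>\<in>?G. c \<gamma> * (\<Sum>f\<in>?F. Emf d N x y \<mu> f * tmon d \<gamma> (fnode d x f)))"
      unfolding c by (rule lin)
    also have "\<dots> = (\<Sum>\<gamma>\<in>?G. c \<gamma> * tmon d \<gamma> (mpoint y \<mu>))"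
      by (intro sum.cong refl) (simp add: S.F2[OF _ mortar mu])
    finally show ?thesis using c by simp
  qed
  have L3: "(\<Sum>\<mu>\<in>?M. Emf d N x y \<mu> f * mweight om \<mu> * g (mpoint y \<mu>)) = fweight d w f * g (fnode d x f)"
    if f: "f \<in> ?F" for f
  proof -
    have "(\<Sum>\<mu>\<in>?M. Emf d N x y \<mu> f * mweight om \<mu> * g (mpoint y \<mu>))
        = (\<Sum>\<gamma>\<in>?G. c \<gamma> * (\<Sum>\<mu>\<in>?M. Emf d N x y \<mu> f * mweight om \<mu> * tmon d \<gamma> (mpoint y \<mu>)))"
      unfolding c by (rule lin)
    also have "\<dots> = (\<Sum>\<gamma>\<in>?G. c \<gamma> * (fweight d w f * tmon d \<gamma> (fnode d x f)))"
      by (intro sum.cong refl) (simp add: S.F3[OF _ mortar f face_exact mortar_exact KNf KNm])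
    finally show ?thesis using c by (simp add: sum_distrib_left mult_ac)
  qed
  have fwnz: "fweight d w f \<noteq> 0" if f: "f \<in> ?F" for f
  proof -
    obtain k s \<alpha>' where f_eq: "f = (k,s,\<alpha>')" and k: "k < d" and a': "\<alpha>' \<in> face_set d N k s"
      using f unfolding fidx_set_def by auto
    have "w (\<alpha>' ! l) \<noteq> 0" if "l \<in> {..<d} - {k}" for l
      using wnz vidx_nth[OF face_set_vidx[OF a'], of l] that by simp
    then show ?thesis unfolding f_eq fweight_def by (simp add: prod_zero_iff)
  qed
  have RF: "Rh (HF f) = 0" if f: "f \<in> ?F" for f
  proof -
    define nf where "nf = nrm i (fst f) (fst (snd f)) * fweight d w f"
    have "(\<Sum>\<mu>\<in>?M. Efm d N x w y om f \<mu> * g (mpoint y \<mu>))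
        = (1 / fweight d w f) * (\<Sum>\<mu>\<in>?M. Emf d N x y \<mu> f * mweight om \<mu> * g (mpoint y \<mu>))"
      unfolding Efm_def by (simp add: sum_distrib_left mult_ac)
    also have "\<dots> = g (fnode d x f)" using L3[OF f] fwnz[OF f] by simp
    finally have E: "(\<Sum>\<mu>\<in>?M. Efm d N x w y om f \<mu> * g (mpoint y \<mu>)) = g (fnode d x f)" .
    have "Rh (HF f) = (\<Sum>\<beta>\<in>?V. (1/2) * (- nf * Emat d N x f \<beta>) * g (vnode d x \<beta>))
        + (\<Sum>\<mu>\<in>?M. (1/2) * (nf * Efm d N x w y om f \<mu>) * g (mpoint y \<mu>))"
      unfolding Rh_def sum_hidx by (simp add: Qim_simps gvV gvF gvM nf_def)
    also have "\<dots> = (1/2) * (- nf) * (\<Sum>\<beta>\<in>?V. Emat d N x f \<beta> * g (vnode d x \<beta>))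
        + (1/2) * nf * (\<Sum>\<mu>\<in>?M. Efm d N x w y om f \<mu> * g (mpoint y \<mu>))"
      by (simp add: sum_distrib_left mult_ac)
    also have "\<dots> = 0" unfolding L1 E by simp
    finally show ?thesis .
  qed
  have RM: "Rh (HM \<mu>) = 0" if mu: "\<mu> \<in> ?M" for \<mu>
  proof -
    define nm where "nm = nrm i (fst \<mu>) (fst (snd \<mu>)) * mweight om \<mu>"
    have "Rh (HM \<mu>) = (\<Sum>f\<in>?F. (1/2) * (- nm * Emf d N x y \<mu> f) * g (fnode d x f))
        + (\<Sum>\<mu>'\<in>?M. (1/2) * (if \<mu> = \<mu>' then nm else 0) * g (mpoint y \<mu>'))"
      unfolding Rh_def sum_hidx nm_def by (simp add: Qim_simps gvV gvF gvM)
    also have "\<dots> = (1/2) * (- nm) * (\<Sum>f\<in>?F. Emf d N x y \<mu> f * g (fnode d x f))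
        + (1/2) * nm * g (mpoint y \<mu>)"
    proof -
      have "(\<Sum>\<mu>'\<in>?M. (1/2) * (if \<mu> = \<mu>' then nm else 0) * g (mpoint y \<mu>'))
          = (\<Sum>\<mu>'\<in>?M. if \<mu>' = \<mu> then (1/2) * nm * g (mpoint y \<mu>) else 0)"
        by (intro sum.cong) auto
      also have "\<dots> = (1/2) * nm * g (mpoint y \<mu>)" using mu finite_midx by simp
      finally have s2: "(\<Sum>\<mu>'\<in>?M. (1/2) * (if \<mu> = \<mu>' then nm else 0) * g (mpoint y \<mu>')) = (1/2) * nm * g (mpoint y \<mu>)" .
      have s1: "(\<Sum>f\<in>?F. (1/2) * (- nm * Emf d N x y \<mu> f) * g (fnode d x f)) = (1/2) * (- nm) * (\<Sum>f\<in>?F. Emf d N x y \<mu> f * g (fnode d x f))"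
        unfolding sum_distrib_left by (intro sum.cong refl) (simp add: mult_ac)
      show ?thesis unfolding s1 s2 ..
    qed
    also have "\<dots> = 0" unfolding L2[OF mu] by simp
    finally show ?thesis .
  qed
  have KEY: "(1/2) * ((\<Sum>\<beta>\<in>?V. Qvol d N x w i \<alpha> \<beta> * tmon d \<gamma> (vnode d x \<beta>))
                  - (\<Sum>\<beta>\<in>?V. Qvol d N x w i \<beta> \<alpha> * tmon d \<gamma> (vnode d x \<beta>))
                  + (\<Sum>f\<in>?F. Emat d N x f \<alpha> * (nrm i (fst f) (fst (snd f)) * fweight d w f) * tmon d \<gamma> (fnode d x f)))
             = Mvol d w \<alpha> * dmono d \<gamma> i (vnode d x \<alpha>)" if g: "\<gamma> \<in> ?G" for \<gamma>
  proof -
    define R where "R = (\<Prod>l\<in>{..<d} - {i}. w (\<alpha> ! l) * x (\<alpha> ! l) ^ (\<gamma> ! l))"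
    define C where "C = w (\<alpha> ! i) * (of_nat (\<gamma> ! i) * x (\<alpha> ! i) ^ (\<gamma> ! i - 1))"
    define B where "B = lagrange N x (\<alpha> ! i) 1 - lagrange N x (\<alpha> ! i) (-1) * (-1) ^ (\<gamma> ! i)"
    have "Mvol d w \<alpha> * dmono d \<gamma> i (vnode d x \<alpha>)
        = (\<Prod>l<d. if l = i then C else w (\<alpha> ! l) * x (\<alpha> ! l) ^ (\<gamma> ! l))"
      unfolding Mvol_def dmono_def C_def prod.distrib[symmetric] by (intro prod.cong) (auto simp: vnode_def)
    also have "\<dots> = C * R" unfolding R_def by (rule prod_split[OF i])
    finally have e0: "Mvol d w \<alpha> * dmono d \<gamma> i (vnode d x \<alpha>) = C * R" .
    have e4: "(\<Sum>\<beta>\<in>?V. Qvol d N x w i \<alpha> \<beta> * tmon d \<gamma> (vnode d x \<beta>)) = C * R"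
      unfolding S.F4[OF g a i] C_def R_def by (rule prod_split[OF i])
    have e5: "(\<Sum>\<beta>\<in>?V. Qvol d N x w i \<beta> \<alpha> * tmon d \<gamma> (vnode d x \<beta>)) = (B - C) * R"
      unfolding S.F5[OF g a i] C_def R_def B_def by (subst prod_split[OF i]) (simp add: algebra_simps)
    have eb: "(\<Sum>f\<in>?F. Emat d N x f \<alpha> * (nrm i (fst f) (fst (snd f)) * fweight d w f) * tmon d \<gamma> (fnode d x f)) = B * R"
      unfolding S.Fb[OF g a i] B_def R_def by (rule prod_split[OF i])
    show ?thesis unfolding e0 e4 e5 eb by (simp add: algebra_simps)
  qed
  have RV: "Rh (HV \<alpha>) = Mvol d w \<alpha> * partial_deriv g i (vnode d x \<alpha>)"
  proof -
    have "Rh (HV \<alpha>) = (\<Sum>\<beta>\<in>?V. (1/2) * (Qvol d N x w i \<alpha> \<beta> - Qvol d N x w i \<beta> \<alpha>) * g (vnode d x \<beta>))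
        + (\<Sum>f\<in>?F. (1/2) * (Emat d N x f \<alpha> * (nrm i (fst f) (fst (snd f)) * fweight d w f)) * g (fnode d x f))"
      unfolding Rh_def sum_hidx by (simp add: Qim_simps gvV gvF gvM)
    also have "\<dots> = (1/2) * ((\<Sum>\<beta>\<in>?V. Qvol d N x w i \<alpha> \<beta> * g (vnode d x \<beta>))
                  - (\<Sum>\<beta>\<in>?V. Qvol d N x w i \<beta> \<alpha> * g (vnode d x \<beta>))
                  + (\<Sum>f\<in>?F. Emat d N x f \<alpha> * (nrm i (fst f) (fst (snd f)) * fweight d w f) * g (fnode d x f)))"
      by (rule half_lemma)
    also have "\<dots> = (1/2) * ((\<Sum>\<gamma>\<in>?G. c \<gamma> * (\<Sum>\<beta>\<in>?V. Qvol d N x w i \<alpha> \<beta> * tmon d \<gamma> (vnode d x \<beta>)))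
                  - (\<Sum>\<gamma>\<in>?G. c \<gamma> * (\<Sum>\<beta>\<in>?V. Qvol d N x w i \<beta> \<alpha> * tmon d \<gamma> (vnode d x \<beta>)))
                  + (\<Sum>\<gamma>\<in>?G. c \<gamma> * (\<Sum>f\<in>?F. Emat d N x f \<alpha> * (nrm i (fst f) (fst (snd f)) * fweight d w f) * tmon d \<gamma> (fnode d x f))))"
    proof -
      have e1: "(\<Sum>\<beta>\<in>?V. Qvol d N x w i \<alpha> \<beta> * g (vnode d x \<beta>)) = (\<Sum>\<gamma>\<in>?G. c \<gamma> * (\<Sum>\<beta>\<in>?V. Qvol d N x w i \<alpha> \<beta> * tmon d \<gamma> (vnode d x \<beta>)))"
        unfolding c by (rule lin)
      have e2: "(\<Sum>\<beta>\<in>?V. Qvol d N x w i \<beta> \<alpha> * g (vnode d x \<beta>)) = (\<Sum>\<gamma>\<in>?G. c \<gamma> * (\<Sum>\<beta>\<in>?V. Qvol d N x w i \<beta> \<alpha> * tmon d \<gamma> (vnode d x \<beta>)))"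
        unfolding c by (rule lin)
      have e3: "(\<Sum>f\<in>?F. Emat d N x f \<alpha> * (nrm i (fst f) (fst (snd f)) * fweight d w f) * g (fnode d x f))
          = (\<Sum>\<gamma>\<in>?G. c \<gamma> * (\<Sum>f\<in>?F. Emat d N x f \<alpha> * (nrm i (fst f) (fst (snd f)) * fweight d w f) * tmon d \<gamma> (fnode d x f)))"
        unfolding c by (rule lin)
      show ?thesis unfolding e1 e2 e3 ..
    qed
    also have "\<dots> = (\<Sum>\<gamma>\<in>?G. c \<gamma> * ((1/2) * ((\<Sum>\<beta>\<in>?V. Qvol d N x w i \<alpha> \<beta> * tmon d \<gamma> (vnode d x \<beta>))
                  - (\<Sum>\<beta>\<in>?V. Qvol d N x w i \<beta> \<alpha> * tmon d \<gamma> (vnode d x \<beta>))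
                  + (\<Sum>f\<in>?F. Emat d N x f \<alpha> * (nrm i (fst f) (fst (snd f)) * fweight d w f) * tmon d \<gamma> (fnode d x f)))))"
      by (rule lin3)
    also have "\<dots> = (\<Sum>\<gamma>\<in>?G. c \<gamma> * (Mvol d w \<alpha> * dmono d \<gamma> i (vnode d x \<alpha>)))"
      using KEY by (intro sum.cong refl) simp
    also have "\<dots> = Mvol d w \<alpha> * (\<Sum>\<gamma>\<in>?G. c \<gamma> * dmono d \<gamma> i (vnode d x \<alpha>))"
      by (simp add: sum_distrib_left mult_ac)
    also have "\<dots> = Mvol d w \<alpha> * partial_deriv g i (vnode d x \<alpha>)"
      using partial_deriv_poly[OF i c] by simp
    finally show ?thesis .
  qed
  have "(\<Sum>h\<in>hidx_set d N m. Prow d N x m y \<alpha> h * Rh h)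
      = (\<Sum>\<beta>\<in>?V. Prow d N x m y \<alpha> (HV \<beta>) * Rh (HV \<beta>))"
    unfolding sum_hidx using RF RM by simp
  also have "\<dots> = (\<Sum>\<beta>\<in>?V. if \<beta> = \<alpha> then Rh (HV \<alpha>) else 0)"
    by (intro sum.cong refl) (auto simp: Prow_def)
  also have "\<dots> = Rh (HV \<alpha>)" using a finite_vidx by simp
  finally have main: "(\<Sum>h\<in>hidx_set d N m. Prow d N x m y \<alpha> h * Rh h) = Mvol d w \<alpha> * partial_deriv g i (vnode d x \<alpha>)"
    using RV by simp
  have Mnz: "Mvol d w \<alpha> \<noteq> 0"
  proof -
    have "w (\<alpha> ! l) \<noteq> 0" if "l \<in> {..<d}" for l using wnz vidx_nth[OF a, of l] that by simp
    then show ?thesis unfolding Mvol_def by (simp add: prod_zero_iff)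
  qed
  show "(1 / Mvol d w \<alpha>) * (\<Sum>h\<in>hidx_set d N m. Prow d N x m y \<alpha> h *
                (\<Sum>h'\<in>hidx_set d N m. Qim d N x w y om i h h' * gvec d x y g h'))
           = partial_deriv g i (vnode d x \<alpha>)"
    using main Mnz unfolding Rh_def gv_def by simp
qed

end
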